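(* Let $J\in\mathbb Z_{>0}$, $i_1,i_2\in\mathbb Z_{\ge0}$ and $j_1,j_2\in\{0,1,\dots,J\}$ with $i_1+j_1=i_2+j_2$, and set $v=-\eta\Lambda$. Then $$W_J(i_1,j_1;i_2,j_2\mid -\eta\Lambda,\lambda)=f(2\eta)^{i_2-i_1}\frac{\mathbf 1_{i_1\ge j_2}[2\eta J]_J}{[2\eta j_1]_{j_1}[2\eta(J-j_1)]_{J-j_1}}\frac{[2\eta\Lambda]_{i_1}}{[2\eta\Lambda]_{i_2}}\frac{[2\eta i_1]_{j_2}[2\eta(\Lambda-i_1)]_{J-j_2}}{[2\eta\Lambda]_J}$$ $$\times\frac{[\lambda+2\eta i_2]_{J-j_1}[\lambda+2\eta(i_2+j_1-\Lambda-1)]_{j_1}}{[\lambda+2\eta j_1]_{J-j_1}[\lambda+2\eta(2j_1-J-1)]_{j_1}}.$$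
   Context: Fix $\eta,\tau\in\mathbb C$, $\operatorname{Im}\tau>0$. $f(z)$ denotes either $\theta(z)=-\sum_{j\in\mathbb Z}\exp\big(\pi\mathbf i\tau(j+\tfrac12)^2+2\pi\mathbf i(j+\tfrac12)(z+\tfrac12)\big)$ or $\sin(\pi z)$. Elliptic Pochhammer: $[a]_k=\prod_{m=0}^{k-1}f(a-2\eta m)$ for $k\ge0$, $[a]_k=\prod_{m=1}^{-k}f(a+2\eta m)^{-1}$ for $k<0$. Unfused weights ($k\ge0$): $W_1(k,0;k,0\mid v,\lambda,\Lambda)=\frac{f(\eta(\Lambda-2k)-v)f(\lambda+2k\eta)}{f(\eta\Lambda-v)f(\lambda)}$, $W_1(k,1;k+1,0\mid\cdot)=\frac{f(v+\lambda+\eta(2k+2-\Lambda))f(2\eta)}{f(\eta\Lambda-v)f(\lambda)}$, $W_1(k,0;k-1,1\mid\cdot)=\frac{f(\lambda-v+\eta(2k-2-\Lambda))f(2\eta(\Lambda+1-k))f(2k\eta)}{f(\eta\Lambda-v)f(\lambda)f(2\eta)}$ ($k\ge1$), $W_1(k,1;k,1\mid\cdot)=\frac{f(\eta(2k-\Lambda)-v)f(\lambda+2\eta(k-\Lambda))}{f(\eta\Lambda-v)f(\lambda)}$, and $0$ otherwise. Column weights: for $\mathcal J_1=(j_{1,k})_{k=1}^J,\mathcal J_2=(j_{2,k})_{k=1}^J\in\{0,1\}^J$, $i^{(1)}=i_1$, $i^{(k+1)}=i^{(k)}+j_{1,k}-j_{2,k}$, $\Phi_J=\lambda$, $\Phi_k=\Phi_{k+1}\mp2\eta$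 according as $j_{1,k+1}=0$ or $1$; $W_J(i_1,\mathcal J_1;i_2,\mathcal J_2\mid v,\lambda)=\prod_{k=1}^JW_1(i^{(k)},j_{1,k};i^{(k+1)},j_{2,k}\mid v+2\eta(k-1),\Phi_k,\Lambda)$ if all $i^{(k)}\ge0$ and $i^{(J+1)}=i_2$, else $0$. Fused weight: $W_J(i_1,j_1;i_2,j_2\mid v,\lambda)=\sum_{|\mathcal J_1|=j_1}W_J(i_1,\mathcal J_1;i_2,\mathcal K\mid v,\lambda)$ for any $\mathcal K$ with $|\mathcal K|=j_2$ (independent of $\mathcal K$); $\Lambda$ is suppressed. *)

theory Defs
  imports "HOL-Analysis.Analysis"
begin

definition theta_fn :: "complex \<Rightarrow> complex \<Rightarrow> complex" where
  "theta_fn \<tau> z = - (\<Sum>\<^sub>\<infinity>j::int.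
      exp (pi * \<i> * \<tau> * (of_int j + 1/2)^2 + 2 * pi * \<i> * (of_int j + 1/2) * (z + 1/2)))"

definition epoch :: "(complex \<Rightarrow> complex) \<Rightarrow> complex \<Rightarrow> complex \<Rightarrow> int \<Rightarrow> complex" where
  "epoch f \<eta> a k =
     (if k \<ge> 0 then (\<Prod>m<nat k. f (a - 2 * \<eta> * of_nat m))
      else (\<Prod>m\<in>{1..nat (-k)}. inverse (f (a + 2 * \<eta> * of_nat m))))"

definition W1 :: "(complex \<Rightarrow> complex) \<Rightarrow> complex \<Rightarrow> complex \<Rightarrow>
    int \<Rightarrow> nat \<Rightarrow> int \<Rightarrow> nat \<Rightarrow> complex \<Rightarrow> complex \<Rightarrow> complex" where
  "W1 f \<eta> \<Lambda> k b k' d v l =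
    (if k < 0 then 0
     else if b = 0 \<and> k' = k \<and> d = 0 then
       f (\<eta> * (\<Lambda> - 2 * of_int k) - v) * f (l + 2 * of_int k * \<eta>) / (f (\<eta> * \<Lambda> - v) * f l)
     else if b = 1 \<and> k' = k + 1 \<and> d = 0 then
       f (v + l + \<eta> * (2 * of_int k + 2 - \<Lambda>)) * f (2 * \<eta>) / (f (\<eta> * \<Lambda> - v) * f l)
     else if b = 0 \<and> k' = k - 1 \<and> d = 1 \<and> k \<ge> 1 then
       f (l - v + \<eta> * (2 * of_int k - 2 - \<Lambda>)) * f (2 * \<eta> * (\<Lambda> + 1 - of_int k)) * f (2 * of_int k * \<eta>)
         / (f (\<eta> * \<Lambda> - v) * f l * f (2 * \<eta>))
     else if b = 1 \<and> k' = k \<and> d = 1 then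
       f (\<eta> * (2 * of_int k - \<Lambda>) - v) * f (l + 2 * \<eta> * (of_int k - \<Lambda>)) / (f (\<eta> * \<Lambda> - v) * f l)
     else 0)"

text \<open>Binary sequences (j_1,...,j_J) represented as lists of length J; entry k is xs!(k-1).\<close>
definition bin_seqs :: "nat \<Rightarrow> nat list set" where
  "bin_seqs J = {xs. length xs = J \<and> set xs \<subseteq> {0, 1}}"

definition ipos :: "nat \<Rightarrow> nat list \<Rightarrow> nat list \<Rightarrow> nat \<Rightarrow> int" where
  "ipos i1 J1 J2 k = int i1 + (\<Sum>m\<in>{1..<k}. int (J1 ! (m - 1)) - int (J2 ! (m - 1)))"

text \<open>Phi_J = l, Phi_k = Phi_{k+1} - 2 eta if j_{1,k+1}=0, + 2 eta if j_{1,k+1}=1.\<close>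
definition Phi :: "complex \<Rightarrow> complex \<Rightarrow> nat \<Rightarrow> nat list \<Rightarrow> nat \<Rightarrow> complex" where
  "Phi \<eta> l J J1 k = l + (\<Sum>m\<in>{k+1..J}. (if J1 ! (m - 1) = 0 then - 2 * \<eta> else 2 * \<eta>))"

definition WJcol :: "(complex \<Rightarrow> complex) \<Rightarrow> complex \<Rightarrow> complex \<Rightarrow> nat \<Rightarrow>
    nat \<Rightarrow> nat list \<Rightarrow> nat \<Rightarrow> nat list \<Rightarrow> complex \<Rightarrow> complex \<Rightarrow> complex" where
  "WJcol f \<eta> \<Lambda> J i1 J1 i2 J2 v l =
    (if (\<forall>k\<in>{1..J+1}. ipos i1 J1 J2 k \<ge> 0) \<and> ipos i1 J1 J2 (J + 1) = int i2 then
       (\<Prod>k\<in>{1..J}. W1 f \<eta> \<Lambda> (ipos i1 J1 J2 k) (J1 ! (k - 1)) (ipos i1 J1 J2 (k + 1)) (J2 ! (k - 1))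
                         (v + 2 * \<eta> * of_nat (k - 1)) (Phi \<eta> l J J1 k))
     else 0)"

text \<open>Fused weight: sum over J1 with |J1| = j1, for a (any) fixed K with |K| = j2.\<close>
definition WJ :: "(complex \<Rightarrow> complex) \<Rightarrow> complex \<Rightarrow> complex \<Rightarrow> nat \<Rightarrow>
    nat \<Rightarrow> nat \<Rightarrow> nat \<Rightarrow> nat \<Rightarrow> complex \<Rightarrow> complex \<Rightarrow> complex" where
  "WJ f \<eta> \<Lambda> J i1 j1 i2 j2 v l =
    (let K = (SOME K. K \<in> bin_seqs J \<and> sum_list K = j2) in
     \<Sum>J1\<in>{xs \<in> bin_seqs J. sum_list xs = j1}. WJcol f \<eta> \<Lambda> J i1 J1 i2 K v l)"

end

theory Submission
  imports Defs
begin

lemma exp_abs_int_summable: "(\<lambda>n::int. exp (- real_of_int \<bar>n\<bar>)) summable_on UNIV"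
proof -
  have U: "(UNIV::int set) = range int \<union> range (\<lambda>n. - int n - 1)"
  proof (intro set_eqI iffI)
    fix x :: int assume "x \<in> UNIV"
    show "x \<in> range int \<union> range (\<lambda>n. - int n - 1)"
    proof (cases "x \<ge> 0")
      case True then have "x = int (nat x)" by simp
      then show ?thesis by blast
    next
      case False then have "x = - int (nat (- x - 1)) - 1" by simp
      then show ?thesis by blast
    qed
  qed simp
  have g: "summable (\<lambda>n::nat. exp (-1::real) ^ n)"
  proof -
    have "norm (exp (-1::real)) < 1" by simp
    from summable_geometric[OF this] show ?thesis .
  qed
  have 1: "(\<lambda>n::nat. exp (- real n)) summable_on UNIV"
    by (rule summable_nonneg_imp_summable_on) (use g in \<open>auto simp: exp_of_nat_mult[symmetric] mult.commute\<close>)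
  have 2: "(\<lambda>n::nat. exp (- 1) * exp (- real n)) summable_on UNIV"
    using 1 by (rule summable_on_cmult_right)
  have a: "(\<lambda>n::int. exp (- real_of_int \<bar>n\<bar>)) summable_on range int"
    by (subst summable_on_reindex) (use 1 in \<open>auto simp: o_def\<close>)
  have b: "(\<lambda>n::int. exp (- real_of_int \<bar>n\<bar>)) summable_on range (\<lambda>n. - int n - 1)"
  proof (subst summable_on_reindex)
    show "inj_on (\<lambda>n. - int n - 1) UNIV" by (auto simp: inj_on_def)
    show "((\<lambda>n::int. exp (- real_of_int \<bar>n\<bar>)) \<circ> (\<lambda>n. - int n - 1)) summable_on UNIV"
      using 2 by (simp add: o_def exp_add[symmetric] algebra_simps)
  qed
  show ?thesis unfolding U by (rule summable_on_Un_disjoint) (use a b in auto)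
qed

lemma gauss_summable:
  fixes c d :: real assumes c: "c > 0"
  shows "(\<lambda>n::int. exp (- c * (of_int n)^2 + d * of_int n)) summable_on UNIV"
proof -
  define K where "K = (\<bar>d\<bar> + 1)^2 / (4*c)"
  have bound: "exp (- c * (of_int n)^2 + d * of_int n) \<le> exp K * exp (- real_of_int \<bar>n\<bar>)" for n :: int
  proof -
    define t where "t = real_of_int \<bar>n\<bar>"
    have t2: "(of_int n)^2 = t^2" unfolding t_def by simp
    have dn: "d * of_int n \<le> \<bar>d\<bar> * t" unfolding t_def
      by (metis abs_ge_self abs_mult of_int_abs)
    have "0 \<le> c * (t - (\<bar>d\<bar>+1)/(2*c))^2" using c by simp
    also have "c * (t - (\<bar>d\<bar>+1)/(2*c))^2 = c*t^2 - (\<bar>d\<bar>+1)*t + K"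
      using c unfolding K_def by (simp add: power2_eq_square field_simps)
    finally have "- c * t^2 + \<bar>d\<bar> * t \<le> K - t" by (simp add: algebra_simps)
    moreover have "- c * (of_int n)^2 + d * of_int n = - c * t^2 + d * of_int n" using t2 by simp
    ultimately have "- c * (of_int n)^2 + d * of_int n \<le> K + - t" using dn by linarith
    then show ?thesis unfolding t_def exp_add[symmetric] by simp
  qed
  have s: "(\<lambda>n::int. exp K * exp (- real_of_int \<bar>n\<bar>)) summable_on UNIV"
    by (rule summable_on_cmult_right) (rule exp_abs_int_summable)
  have s': "(\<lambda>n::int. norm (exp K * exp (- real_of_int \<bar>n\<bar>))) summable_on UNIV"
    using s by (simp add: summable_on_iff_abs_summable_on_real[symmetric])
  have "(\<lambda>n::int. norm (exp (- c * (of_int n)^2 + d * of_int n))) summable_on UNIV"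
    apply (rule Infinite_Sum.abs_summable_on_comparison_test[of "\<lambda>n::int. exp K * exp (- real_of_int \<bar>n\<bar>)"])
     apply (fact s')
    using bound by simp
  then show ?thesis by simp
qed

lemma Re_mult_ofr: "Re (z * of_real r) = Re z * r"
  by simp

lemma quad_exp_summable:
  fixes A B :: complex and b :: real
  assumes "Re A < 0"
  shows "(\<lambda>j::int. exp (A * (of_real (of_int j + b))^2 + B * of_real (of_int j + b))) summable_on UNIV"
proof -
  define e where "e = Re A * b^2 + Re B * b"
  have eq: "norm (exp (A * (of_real (of_int j + b))^2 + B * of_real (of_int j + b)))
     = exp e * exp (- (- Re A) * (of_int j)^2 + (2 * b * Re A + Re B) * of_int j)" for j :: int
  proof -
    have "Re (A * (of_real (of_int j + b))^2 + B * of_real (of_int j + b))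
        = Re A * (of_int j + b)^2 + Re B * (of_int j + b)"
    proof -
      have "(of_real (of_int j + b) :: complex)^2 = of_real ((of_int j + b)^2)" by simp
      then show ?thesis by (simp only: plus_complex.sel Re_mult_ofr)
    qed
    also have "\<dots> = e + (- (- Re A) * (of_int j)^2 + (2 * b * Re A + Re B) * of_int j)"
      unfolding e_def by (simp add: power2_eq_square algebra_simps)
    finally have R: "Re (A * (of_real (of_int j + b))^2 + B * of_real (of_int j + b)) = e + (- (- Re A) * (of_int j)^2 + (2 * b * Re A + Re B) * of_int j)" .
    show ?thesis by (simp only: norm_exp_eq_Re R exp_add[of e])
  qed
  have s: "(\<lambda>j::int. exp e * exp (- (- Re A) * (of_int j)^2 + (2 * b * Re A + Re B) * of_int j)) summable_on UNIV"
    by (rule summable_on_cmult_right) (rule gauss_summable, use assms in simp)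
  have "(\<lambda>j::int. norm (exp (A * (of_real (of_int j + b))^2 + B * of_real (of_int j + b)))) summable_on UNIV"
    unfolding eq by (fact s)
  then show ?thesis by (simp only: summable_on_iff_abs_summable_on_complex)
qed


definition thT :: "complex \<Rightarrow> complex \<Rightarrow> int \<Rightarrow> complex" where
  "thT \<tau> z j = exp (pi * \<i> * \<tau> * (of_int j + 1/2)^2 + 2 * pi * \<i> * (of_int j + 1/2) * (z + 1/2))"

definition hh :: "complex \<Rightarrow> complex \<Rightarrow> int \<Rightarrow> complex" where
  "hh \<tau> w n = exp (pi * \<i> * (\<tau>/2) * (of_int n)^2 + 2 * pi * \<i> * of_int n * w)"

lemma theta_thT: "theta_fn \<tau> z = - (\<Sum>\<^sub>\<infinity>j. thT \<tau> z j)"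
  unfolding theta_fn_def thT_def ..

lemma thT_summable: assumes "Im \<tau> > 0" shows "thT \<tau> w summable_on UNIV"
proof -
  have "(\<lambda>j::int. exp ((pi * \<i> * \<tau>) * (of_real (of_int j + 1/2))^2 + (2 * pi * \<i> * (w + 1/2)) * of_real (of_int j + 1/2))) summable_on UNIV"
    by (rule quad_exp_summable) (use assms in simp)
  moreover have "thT \<tau> w = (\<lambda>j. exp ((pi * \<i> * \<tau>) * (of_real (of_int j + 1/2))^2 + (2 * pi * \<i> * (w + 1/2)) * of_real (of_int j + 1/2)))"
    unfolding thT_def by (simp add: algebra_simps fun_eq_iff)
  ultimately show ?thesis by simp
qed

lemma hh_summable: assumes "Im \<tau> > 0" shows "hh \<tau> w summable_on UNIV"
proof -
  have "(\<lambda>j::int. exp ((pi * \<i> * (\<tau>/2)) * (of_real (of_int j + 0))^2 + (2 * pi * \<i> * w) * of_real (of_int j + 0))) summable_on UNIV"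
    by (rule quad_exp_summable) (use assms in simp)
  moreover have "hh \<tau> w = (\<lambda>j. exp ((pi * \<i> * (\<tau>/2)) * (of_real (of_int j + 0))^2 + (2 * pi * \<i> * w) * of_real (of_int j + 0)))"
    unfolding hh_def by (simp add: algebra_simps fun_eq_iff)
  ultimately show ?thesis by simp
qed

lemma pw1: "thT \<tau> (x+y) (r+s) * thT \<tau> (x-y) (r-s-1) = hh \<tau> x (2 * r) * hh \<tau> y (2 * s + 1)"
proof -
  have "thT \<tau> (x+y) (r+s) * thT \<tau> (x-y) (r-s-1) =
     exp ((pi * \<i> * (\<tau>/2) * (of_int (2 * r))^2 + 2 * pi * \<i> * of_int (2 * r) * x
          + (pi * \<i> * (\<tau>/2) * (of_int (2 * s + 1))^2 + 2 * pi * \<i> * of_int (2 * s + 1) * y))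
          + \<i> * (of_int r * (of_real pi * 2)))"
    unfolding thT_def exp_add[symmetric]
    by (rule arg_cong[where f=exp]) (simp add: algebra_simps power2_eq_square)
  also have "\<dots> = exp (pi * \<i> * (\<tau>/2) * (of_int (2 * r))^2 + 2 * pi * \<i> * of_int (2 * r) * x
          + (pi * \<i> * (\<tau>/2) * (of_int (2 * s + 1))^2 + 2 * pi * \<i> * of_int (2 * s + 1) * y))"
    by (rule exp_plus_2pin)
  also have "\<dots> = hh \<tau> x (2 * r) * hh \<tau> y (2 * s + 1)"
    unfolding hh_def exp_add ..
  finally show ?thesis .
qed

lemma pw2: "thT \<tau> (x+y) (r+s) * thT \<tau> (x-y) (r-s) = - (hh \<tau> x (2 * r + 1) * hh \<tau> y (2 * s))"
proof -
  have "thT \<tau> (x+y) (r+s) * thT \<tau> (x-y) (r-s) =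
     exp ((pi * \<i> * (\<tau>/2) * (of_int (2 * r + 1))^2 + 2 * pi * \<i> * of_int (2 * r + 1) * x
          + (pi * \<i> * (\<tau>/2) * (of_int (2 * s))^2 + 2 * pi * \<i> * of_int (2 * s) * y))
          + \<i> * (of_int r * (of_real pi * 2))) * exp (of_real pi * \<i>)"
    unfolding thT_def exp_add[symmetric]
    by (rule arg_cong[where f=exp]) (simp add: algebra_simps power2_eq_square)
  also have "\<dots> = exp (pi * \<i> * (\<tau>/2) * (of_int (2 * r + 1))^2 + 2 * pi * \<i> * of_int (2 * r + 1) * x
          + (pi * \<i> * (\<tau>/2) * (of_int (2 * s))^2 + 2 * pi * \<i> * of_int (2 * s) * y)) * exp (of_real pi * \<i>)"
    by (simp only: exp_plus_2pin)
  also have "\<dots> = - (hh \<tau> x (2 * r + 1) * hh \<tau> y (2 * s))"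
    unfolding hh_def exp_add exp_pi_i by simp
  finally show ?thesis .
qed


lemma infsum_mult_pairs:
  fixes f :: "'a \<Rightarrow> complex" and g :: "'b \<Rightarrow> complex"
  assumes f: "f summable_on UNIV" and g: "g summable_on UNIV"
  shows "(\<lambda>(j,k). f j * g k) summable_on UNIV"
    and "(\<Sum>\<^sub>\<infinity>j. f j) * (\<Sum>\<^sub>\<infinity>k. g k) = (\<Sum>\<^sub>\<infinity>(j,k). f j * g k)"
proof -
  have nf: "(\<lambda>j. norm (f j)) summable_on UNIV" using f summable_on_iff_abs_summable_on_complex by blast
  have ng: "(\<lambda>j. norm (g j)) summable_on UNIV" using g summable_on_iff_abs_summable_on_complex by blast
  have "(\<lambda>p. norm ((\<lambda>(j,k). f j * g k) p)) summable_on Sigma UNIV (\<lambda>_. UNIV)"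
  proof (subst Infinite_Sum.abs_summable_on_Sigma_iff, intro conjI ballI)
    fix x :: 'a
    show "(\<lambda>y. norm ((\<lambda>(j,k). f j * g k) (x, y))) summable_on UNIV"
      using summable_on_cmult_right[OF ng, of "norm (f x)"] by (simp add: norm_mult)
  next
    have "(\<lambda>x. norm (\<Sum>\<^sub>\<infinity>y. norm ((\<lambda>(j,k). f j * g k) (x, y)))) = (\<lambda>x. norm (f x) * (\<Sum>\<^sub>\<infinity>y. norm (g y)))"
      by (simp add: norm_mult infsum_cmult_right' infsum_nonneg abs_mult)
    then show "(\<lambda>x. norm (\<Sum>\<^sub>\<infinity>y. norm ((\<lambda>(j,k). f j * g k) (x, y)))) summable_on UNIV"
      using summable_on_cmult_left[OF nf] by simp
  qed
  then have S: "(\<lambda>(j,k). f j * g k) summable_on Sigma UNIV (\<lambda>_. UNIV)"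
    using summable_on_iff_abs_summable_on_complex by blast
  then show "(\<lambda>(j,k). f j * g k) summable_on UNIV" by simp
  have "(\<Sum>\<^sub>\<infinity>j. f j) * (\<Sum>\<^sub>\<infinity>k. g k) = (\<Sum>\<^sub>\<infinity>j. f j * (\<Sum>\<^sub>\<infinity>k. g k))"
    by (rule infsum_cmult_left'[symmetric])
  also have "\<dots> = (\<Sum>\<^sub>\<infinity>j. \<Sum>\<^sub>\<infinity>k. f j * g k)"
    by (simp add: infsum_cmult_right')
  also have "\<dots> = (\<Sum>\<^sub>\<infinity>(j,k)\<in>Sigma UNIV (\<lambda>_. UNIV). f j * g k)"
    by (rule infsum_Sigma'_banach[of "\<lambda>j k. f j * g k"]) (use S in simp)
  finally show "(\<Sum>\<^sub>\<infinity>j. f j) * (\<Sum>\<^sub>\<infinity>k. g k) = (\<Sum>\<^sub>\<infinity>(j,k). f j * g k)" by simp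
qed

lemma hh_sub_summable:
  assumes "Im \<tau> > 0" shows "(\<lambda>r. hh \<tau> w (2 * r + c)) summable_on UNIV"
proof -
  have "hh \<tau> w summable_on range (\<lambda>r::int. 2 * r + c)"
    by (rule summable_on_subset_banach[OF hh_summable[OF assms]]) auto
  moreover have "inj_on (\<lambda>r::int. 2 * r + c) UNIV" by (auto simp: inj_on_def)
  ultimately show ?thesis by (simp add: summable_on_reindex o_def)
qed

lemma pair_split:
  fixes p1 p2 :: "int \<times> int \<Rightarrow> int \<times> int"
  assumes p1_def: "p1 = (\<lambda>(r,s). (r + s, r - s - 1::int))"
  and p2_def: "p2 = (\<lambda>(r,s). (r + s, r - s::int))"
  shows "(UNIV :: (int \<times> int) set) = range p1 \<union> range p2"
    and "range p1 \<inter> range p2 = {}" and "inj_on p1 UNIV" and "inj_on p2 UNIV"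
proof -
  show "(UNIV :: (int \<times> int) set) = range p1 \<union> range p2"
  proof (intro set_eqI iffI)
    fix z :: "int \<times> int"
    obtain j k where z: "z = (j,k)" by (cases z)
    show "z \<in> range p1 \<union> range p2"
    proof (cases "even (j + k)")
      case True
      then obtain m where m: "j + k = 2 * m" by (rule dvdE)
      have "p2 (m, j - m) = z" unfolding p2_def z using m by simp
      then show ?thesis by blast
    next
      case False
      then obtain m where m: "j + k = 2 * m + 1" by (rule oddE)
      have "p1 (m + 1, j - m - 1) = z" unfolding p1_def z using m by simp
      then show ?thesis by blast
    qed
  qed simp
  show "range p1 \<inter> range p2 = {}"
  proof (rule ccontr)
    assume "range p1 \<inter> range p2 \<noteq> {}"
    then obtain u v where uv: "p1 u = p2 v" by blast
    obtain a b where u: "u = (a,b)" by (cases u)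
    obtain c d where v: "v = (c,d)" by (cases v)
    from uv have "a + b = c + d" "a - b - 1 = c - d" unfolding p1_def p2_def u v by simp_all
    then have "2 * a - 1 = 2 * c" by linarith
    then show False by presburger
  qed
  show "inj_on p1 UNIV"
  proof (rule inj_onI)
    fix u v assume h: "p1 u = p1 v"
    obtain a b where u: "u = (a,b)" by (cases u)
    obtain c d where v: "v = (c,d)" by (cases v)
    from h have "a + b = c + d" "a - b - 1 = c - d - 1" unfolding p1_def u v by simp_all
    then have "a = c" "b = d" by linarith+
    then show "u = v" unfolding u v by simp
  qed
  show "inj_on p2 UNIV"
  proof (rule inj_onI)
    fix u v assume h: "p2 u = p2 v"
    obtain a b where u: "u = (a,b)" by (cases u)
    obtain c d where v: "v = (c,d)" by (cases v)
    from h have "a + b = c + d" "a - b = c - d" unfolding p2_def u v by simp_all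
    then have "a = c" "b = d" by linarith+
    then show "u = v" unfolding u v by simp
  qed
qed

lemma theta_det:
  assumes tau: "Im \<tau> > 0"
  shows "theta_fn \<tau> (x + y) * theta_fn \<tau> (x - y) =
     (\<Sum>\<^sub>\<infinity>r. hh \<tau> x (2 * r + 0)) * (\<Sum>\<^sub>\<infinity>r. hh \<tau> y (2 * r + 1))
   - (\<Sum>\<^sub>\<infinity>r. hh \<tau> x (2 * r + 1)) * (\<Sum>\<^sub>\<infinity>r. hh \<tau> y (2 * r + 0))"
proof -
  define F where "F = (\<lambda>(j,k). thT \<tau> (x+y) j * thT \<tau> (x-y) k)"
  define p1 where "p1 = (\<lambda>(r,s). (r + s, r - s - 1::int))"
  define p2 where "p2 = (\<lambda>(r,s). (r + s, r - s::int))"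
  have FS: "F summable_on UNIV"
    unfolding F_def by (rule infsum_mult_pairs(1)) (rule thT_summable[OF tau])+
  note PS = pair_split[OF p1_def p2_def]
  have U: "(UNIV :: (int \<times> int) set) = range p1 \<union> range p2" by (rule PS(1))
  have disj: "range p1 \<inter> range p2 = {}" by (rule PS(2))
  have inj1: "inj_on p1 UNIV" by (rule PS(3))
  have inj2: "inj_on p2 UNIV" by (rule PS(4))
  have e0: "theta_fn \<tau> (x + y) * theta_fn \<tau> (x - y) = (\<Sum>\<^sub>\<infinity>j. thT \<tau> (x+y) j) * (\<Sum>\<^sub>\<infinity>k. thT \<tau> (x-y) k)"
    unfolding theta_thT by simp
  have e1: "(\<Sum>\<^sub>\<infinity>j. thT \<tau> (x+y) j) * (\<Sum>\<^sub>\<infinity>k. thT \<tau> (x-y) k) = infsum F UNIV"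
    unfolding F_def by (rule infsum_mult_pairs(2)) (rule thT_summable[OF tau])+
  have e2': "infsum F (range p1 \<union> range p2) = infsum F (range p1) + infsum F (range p2)"
    by (rule infsum_Un_disjoint[OF summable_on_subset_banach[OF FS] summable_on_subset_banach[OF FS] disj]) auto
  have e2: "infsum F UNIV = infsum F (range p1) + infsum F (range p2)"
    using arg_cong[OF U, of "infsum F"] e2' by simp
  have e3: "infsum F (range p1) = infsum (F \<circ> p1) UNIV"
    by (rule infsum_reindex[OF inj1])
  have e4: "F \<circ> p1 = (\<lambda>(r,s). hh \<tau> x (2 * r + 0) * hh \<tau> y (2 * s + 1))"
    unfolding F_def p1_def by (simp add: fun_eq_iff pw1)
  have e5: "infsum (\<lambda>(r,s). hh \<tau> x (2 * r + 0) * hh \<tau> y (2 * s + 1)) UNIV = (\<Sum>\<^sub>\<infinity>r. hh \<tau> x (2 * r + 0)) * (\<Sum>\<^sub>\<infinity>r. hh \<tau> y (2 * r + 1))"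
    by (rule infsum_mult_pairs(2)[symmetric]) (rule hh_sub_summable[OF tau])+
  have e6: "infsum F (range p2) = infsum (F \<circ> p2) UNIV"
    by (rule infsum_reindex[OF inj2])
  have e7: "F \<circ> p2 = (\<lambda>z. - ((\<lambda>(r,s). hh \<tau> x (2 * r + 1) * hh \<tau> y (2 * s + 0)) z))"
    unfolding F_def p2_def by (simp add: fun_eq_iff pw2)
  have e8: "infsum (\<lambda>z. - ((\<lambda>(r,s). hh \<tau> x (2 * r + 1) * hh \<tau> y (2 * s + 0)) z)) UNIV = - infsum (\<lambda>(r,s). hh \<tau> x (2 * r + 1) * hh \<tau> y (2 * s + 0)) UNIV"
    by (rule infsum_uminus)
  have e9: "infsum (\<lambda>(r,s). hh \<tau> x (2 * r + 1) * hh \<tau> y (2 * s + 0)) UNIV = (\<Sum>\<^sub>\<infinity>r. hh \<tau> x (2 * r + 1)) * (\<Sum>\<^sub>\<infinity>r. hh \<tau> y (2 * r + 0))"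
    by (rule infsum_mult_pairs(2)[symmetric]) (rule hh_sub_summable[OF tau])+
  show ?thesis
    unfolding e0 e1 e2 e3 e4 e5 e6 e7 e8 e9 by simp
qed


definition G :: "(complex \<Rightarrow> complex) \<Rightarrow> complex \<Rightarrow> complex \<Rightarrow> int \<Rightarrow> complex" where
  "G f \<eta> a k = f (a + 2 * \<eta> * of_int k)"

definition P :: "(complex \<Rightarrow> complex) \<Rightarrow> complex \<Rightarrow> complex \<Rightarrow> int \<Rightarrow> nat \<Rightarrow> complex" where
  "P f \<eta> a c n = (\<Prod>m<n. G f \<eta> a (c - int m))"

lemma P_0 [simp]: "P f \<eta> a c 0 = 1" by (simp add: P_def)

lemma P_front: "P f \<eta> a c (Suc k) = G f \<eta> a c * P f \<eta> a (c - 1) k"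
  unfolding P_def prod.lessThan_Suc_shift by (simp add: algebra_simps)

lemma P_back: "P f \<eta> a c (Suc k) = P f \<eta> a c k * G f \<eta> a (c - int k)"
  unfolding P_def by simp

lemma P_front': "k' = Suc k \<Longrightarrow> c' = c - 1 \<Longrightarrow> d = c \<Longrightarrow> P f \<eta> a c k' = G f \<eta> a d * P f \<eta> a c' k"
  using P_front by simp

lemma P_back': "k' = Suc k \<Longrightarrow> d = c - int k \<Longrightarrow> P f \<eta> a c k' = P f \<eta> a c k * G f \<eta> a d"
  using P_back by simp

lemma P_back'': "k' = Suc k \<Longrightarrow> c'' = c \<Longrightarrow> d = c - int k \<Longrightarrow> P f \<eta> a c k' = P f \<eta> a c'' k * G f \<eta> a d"
  using P_back by simp

lemma G_shift_p: "G f \<eta> (a + 2 * \<eta>) k = G f \<eta> a (k + 1)"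
  unfolding G_def by (simp add: algebra_simps)

lemma G_shift_m: "G f \<eta> (a - 2 * \<eta>) k = G f \<eta> a (k - 1)"
  unfolding G_def by (simp add: algebra_simps)

lemma P_shift_p: "P f \<eta> (a + 2 * \<eta>) c n = P f \<eta> a (c + 1) n"
  unfolding P_def G_shift_p by (simp add: algebra_simps)

lemma P_shift_m: "P f \<eta> (a - 2 * \<eta>) c n = P f \<eta> a (c - 1) n"
  unfolding P_def G_shift_m by (simp add: algebra_simps)

lemma P_slide: "P f \<eta> a (c + 1) m * G f \<eta> a (c + 1 - int m) = G f \<eta> a (c + 1) * P f \<eta> a c m"
proof (induction m)
  case 0 then show ?case by simp
next
  case (Suc m)
  have "P f \<eta> a (c + 1) (Suc m) * G f \<eta> a (c + 1 - int (Suc m))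
      = (P f \<eta> a (c + 1) m * G f \<eta> a (c + 1 - int m)) * G f \<eta> a (c - int m)"
    unfolding P_back by (simp add: algebra_simps)
  also have "\<dots> = G f \<eta> a (c + 1) * (P f \<eta> a c m * G f \<eta> a (c - int m))"
    unfolding Suc.IH by (simp add: algebra_simps)
  also have "\<dots> = G f \<eta> a (c + 1) * P f \<eta> a c (Suc m)"
    unfolding P_back ..
  finally show ?case .
qed

lemma P_nz: "(\<And>m. m < n \<Longrightarrow> G f \<eta> a (c - int m) \<noteq> 0) \<Longrightarrow> P f \<eta> a c n \<noteq> 0"
  unfolding P_def by (simp add: prod_zero_iff)

definition detprop :: "(complex \<Rightarrow> complex) \<Rightarrow> bool" where
  "detprop f \<longleftrightarrow> (\<exists>A B. \<forall>x y. f (x + y) * f (x - y) = A x * B y - B x * A y)"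

lemma det_f0: assumes "detprop f" "f c \<noteq> 0" shows "f 0 = 0"
proof -
  obtain A B where H: "\<And>x y. f (x + y) * f (x - y) = A x * B y - B x * A y"
    using assms(1) unfolding detprop_def by blast
  have "f (c/2 + c/2) * f (c/2 - c/2) = 0" unfolding H by simp
  then show ?thesis using assms(2) by simp
qed

lemma det_odd: assumes "detprop f" "f c \<noteq> 0" shows "f (- w) = - f w"
proof -
  obtain A B where H: "\<And>x y. f (x + y) * f (x - y) = A x * B y - B x * A y"
    using assms(1) unfolding detprop_def by blast
  define x where "x = (c - w) / 2"
  define y where "y = (c + w) / 2"
  have 1: "f (x + y) * f (x - y) = A x * B y - B x * A y" by (rule H)
  have 2: "f (y + x) * f (y - x) = A y * B x - B y * A x" by (rule H)
  have e: "x + y = c" "x - y = - w" "y + x = c" "y - x = w" unfolding x_def y_def by (simp_all add: field_simps)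
  have a: "f c * f (- w) = A x * B y - B x * A y" using 1 unfolding e .
  have b: "f c * f w = A y * B x - B y * A x" using 2 unfolding e .
  have "f c * (f (- w) + f w) = 0" unfolding distrib_left a b by (simp add: algebra_simps)
  with assms(2) show ?thesis by (simp add: add_eq_0_iff2)
qed

lemma det_pl: assumes "detprop f"
  shows "f (x + y) * f (x - y) * (f (u + v) * f (u - v)) - f (x + u) * f (x - u) * (f (y + v) * f (y - v))
       + f (x + v) * f (x - v) * (f (y + u) * f (y - u)) = 0"
proof -
  obtain A B where H: "\<And>x y. f (x + y) * f (x - y) = A x * B y - B x * A y"
    using assms(1) unfolding detprop_def by blast
  show ?thesis unfolding H by (simp add: algebra_simps)
qed


lemma ident_c1:
  fixes i j N :: int
  assumes det: "detprop f" and nz: "f c0 \<noteq> 0"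
  shows "G f \<eta> 0 (i - j + 1) * G f \<eta> 0 (N + 1) * G f \<eta> l (i + j - N) * G f \<eta> l 0
       = G f \<eta> 0 (N + 1 - j) * G f \<eta> l j * G f \<eta> l (i - N) * G f \<eta> 0 (i + 1)
       + G f \<eta> 0 j * G f \<eta> l (i + 1) * G f \<eta> l (j - (N + 1)) * G f \<eta> 0 (i - N)"
proof -
  define x where "x = l + \<eta> * of_int (i + j - N)"
  define y where "y = \<eta> * of_int (i + j - N)"
  define u where "u = \<eta> * of_int (i - j + 1 + (N + 1))"
  define v where "v = \<eta> * of_int (i - j + 1 - (N + 1))"
  have Q: "f (x + y) * f (x - y) * (f (u + v) * f (u - v)) - f (x + u) * f (x - u) * (f (y + v) * f (y - v))
       + f (x + v) * f (x - v) * (f (y + u) * f (y - u)) = 0" by (rule det_pl[OF det])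
  have odd: "\<And>w. f (- w) = - f w" by (rule det_odd[OF det nz])
  have e1: "f (x + y) = G f \<eta> l (i + j - N)" unfolding G_def x_def y_def by (simp add: algebra_simps)
  have e2: "f (x - y) = G f \<eta> l 0" unfolding G_def x_def y_def by (simp add: algebra_simps)
  have e3: "f (u + v) = G f \<eta> 0 (i - j + 1)" unfolding G_def u_def v_def by (simp add: algebra_simps)
  have e4: "f (u - v) = G f \<eta> 0 (N + 1)" unfolding G_def u_def v_def by (simp add: algebra_simps)
  have e5: "f (x + u) = G f \<eta> l (i + 1)" unfolding G_def x_def u_def by (simp add: algebra_simps)
  have e6: "f (x - u) = G f \<eta> l (j - (N + 1))" unfolding G_def x_def u_def by (simp add: algebra_simps)
  have e7: "f (y + v) = G f \<eta> 0 (i - N)" unfolding G_def y_def v_def by (simp add: algebra_simps)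
  have e8: "f (y - v) = G f \<eta> 0 j" unfolding G_def y_def v_def by (simp add: algebra_simps)
  have e9: "f (x + v) = G f \<eta> l (i - N)" unfolding G_def x_def v_def by (simp add: algebra_simps)
  have e10: "f (x - v) = G f \<eta> l j" unfolding G_def x_def v_def by (simp add: algebra_simps)
  have e11: "f (y + u) = G f \<eta> 0 (i + 1)" unfolding G_def y_def u_def by (simp add: algebra_simps)
  have "y - u = - (0 + 2 * \<eta> * of_int (N + 1 - j))" unfolding y_def u_def by (simp add: algebra_simps)
  then have e12: "f (y - u) = - G f \<eta> 0 (N + 1 - j)" by (simp only: G_def odd)
  from Q[unfolded e1 e2 e3 e4 e5 e6 e7 e8 e9 e10 e11 e12] show ?thesis by algebra
qed

lemma ident_c0:
  fixes i j N :: int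
  assumes det: "detprop f" and nz: "f c0 \<noteq> 0"
  shows "G f \<eta> 0 (N + 1) * G f \<eta> (2 * \<eta> * \<Lambda>) (j - i - N) * G f \<eta> l 0 * G f \<eta> (l - 2 * \<eta> * \<Lambda>) (i + j - 1)
       = G f \<eta> 0 (N + 1 - j) * G f \<eta> (2 * \<eta> * \<Lambda>) (- i - N) * G f \<eta> l j * G f \<eta> (l - 2 * \<eta> * \<Lambda>) (i - 1)
       + G f \<eta> 0 j * G f \<eta> (2 * \<eta> * \<Lambda>) (1 - i) * G f \<eta> l (j - (N + 1)) * G f \<eta> (l - 2 * \<eta> * \<Lambda>) (N + i)"
proof -
  define x where "x = l + \<eta> * of_int (i + j - 1) - \<eta> * \<Lambda>"
  define y where "y = \<eta> * of_int (i + j - 1) - \<eta> * \<Lambda>"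
  define u where "u = \<eta> * \<Lambda> + \<eta> * of_int (j - i + 1)"
  define v where "v = - \<eta> * \<Lambda> + \<eta> * of_int (2 * N + 1 - j + i)"
  have Q: "f (x + y) * f (x - y) * (f (u + v) * f (u - v)) - f (x + u) * f (x - u) * (f (y + v) * f (y - v))
       + f (x + v) * f (x - v) * (f (y + u) * f (y - u)) = 0" by (rule det_pl[OF det])
  have odd: "\<And>w. f (- w) = - f w" by (rule det_odd[OF det nz])
  have e1: "f (x + y) = G f \<eta> (l - 2 * \<eta> * \<Lambda>) (i + j - 1)" unfolding G_def x_def y_def by (simp add: algebra_simps)
  have e2: "f (x - y) = G f \<eta> l 0" unfolding G_def x_def y_def by (simp add: algebra_simps)
  have e3: "f (u + v) = G f \<eta> 0 (N + 1)" unfolding G_def u_def v_def by (simp add: algebra_simps)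
  have e4: "f (u - v) = G f \<eta> (2 * \<eta> * \<Lambda>) (j - i - N)" unfolding G_def u_def v_def by (simp add: algebra_simps)
  have e5: "f (x + u) = G f \<eta> l j" unfolding G_def x_def u_def by (simp add: algebra_simps)
  have e6: "f (x - u) = G f \<eta> (l - 2 * \<eta> * \<Lambda>) (i - 1)" unfolding G_def x_def u_def by (simp add: algebra_simps)
  have "y + v = - ((2 * \<eta> * \<Lambda>) + 2 * \<eta> * of_int (- i - N))" unfolding y_def v_def by (simp add: algebra_simps)
  then have e7: "f (y + v) = - G f \<eta> (2 * \<eta> * \<Lambda>) (- i - N)" by (simp only: G_def odd)
  have "y - v = - (0 + 2 * \<eta> * of_int (N + 1 - j))" unfolding y_def v_def by (simp add: algebra_simps)
  then have e8: "f (y - v) = - G f \<eta> 0 (N + 1 - j)" by (simp only: G_def odd)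
  have e9: "f (x + v) = G f \<eta> (l - 2 * \<eta> * \<Lambda>) (N + i)" unfolding G_def x_def v_def by (simp add: algebra_simps)
  have e10: "f (x - v) = G f \<eta> l (j - (N + 1))" unfolding G_def x_def v_def by (simp add: algebra_simps)
  have e11: "f (y + u) = G f \<eta> 0 j" unfolding G_def y_def u_def by (simp add: algebra_simps)
  have "y - u = - ((2 * \<eta> * \<Lambda>) + 2 * \<eta> * of_int (1 - i))" unfolding y_def u_def by (simp add: algebra_simps)
  then have e12: "f (y - u) = - G f \<eta> (2 * \<eta> * \<Lambda>) (1 - i)" by (simp only: G_def odd)
  from Q[unfolded e1 e2 e3 e4 e5 e6 e7 e8 e9 e10 e11 e12] show ?thesis by algebra
qed


definition Rc :: "(complex \<Rightarrow> complex) \<Rightarrow> complex \<Rightarrow> complex \<Rightarrow> nat \<Rightarrow> nat \<Rightarrow> nat \<Rightarrow> nat \<Rightarrow> nat \<Rightarrow> complex \<Rightarrow> complex" where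
  "Rc f \<eta> \<Lambda> n i1 j1 i2 j2 l =
     G f \<eta> 0 1 powi (int i2 - int i1)
   * (P f \<eta> 0 (int n) n / (P f \<eta> 0 (int j1) j1 * P f \<eta> 0 (int n - int j1) (n - j1)))
   * (P f \<eta> (2 * \<eta> * \<Lambda>) 0 i1 / P f \<eta> (2 * \<eta> * \<Lambda>) 0 i2)
   * (P f \<eta> (2 * \<eta> * \<Lambda>) (- int i1) (n - j2) / P f \<eta> (2 * \<eta> * \<Lambda>) 0 n)
   * (P f \<eta> l (int i2) (n - j1) / (P f \<eta> l (int j1) (n - j1) * P f \<eta> l (2 * int j1 - int n - 1) j1))"

locale gen =
  fixes f :: "complex \<Rightarrow> complex" and \<eta> \<Lambda> :: complex
  assumes g1: "\<forall>k::int. k \<noteq> 0 \<longrightarrow> f (2 * \<eta> * of_int k) \<noteq> 0"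
    and g2: "\<forall>k::int. f (2 * \<eta> * (\<Lambda> - of_int k)) \<noteq> 0"
begin

lemma G0_nz: "k \<noteq> 0 \<Longrightarrow> G f \<eta> 0 k \<noteq> 0"
  using g1 unfolding G_def by simp

lemma GL_nz: "G f \<eta> (2 * \<eta> * \<Lambda>) k \<noteq> 0"
proof -
  have "G f \<eta> (2 * \<eta> * \<Lambda>) k = f (2 * \<eta> * (\<Lambda> - of_int (- k)))"
    unfolding G_def by (simp add: algebra_simps)
  then show ?thesis using g2 by metis
qed

lemma Gl_nz: "\<forall>k::int. f (l + 2 * \<eta> * of_int k) \<noteq> 0 \<Longrightarrow> G f \<eta> l k \<noteq> 0"
  unfolding G_def by simp

lemma P0_nz: "int k \<le> c \<Longrightarrow> P f \<eta> 0 c k \<noteq> 0"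
  by (rule P_nz, rule G0_nz) simp

lemma PL_nz: "P f \<eta> (2 * \<eta> * \<Lambda>) c k \<noteq> 0"
  by (rule P_nz, rule GL_nz)

lemma Pl_nz: "\<forall>k::int. f (l + 2 * \<eta> * of_int k) \<noteq> 0 \<Longrightarrow> P f \<eta> l c k \<noteq> 0"
  by (rule P_nz, rule Gl_nz)

lemma r00:
  assumes g3: "\<forall>k::int. f (l + 2 * \<eta> * of_int k) \<noteq> 0"
    and j1: "j1 \<le> n" and j2: "j2 \<le> n" and cons: "i1 + j1 = i2 + j2"
  shows "Rc f \<eta> \<Lambda> n i1 j1 i2 j2 (l - 2 * \<eta>)
       * (G f \<eta> (2 * \<eta> * \<Lambda>) (- int i2 - int n) * G f \<eta> l (int i2) / (G f \<eta> (2 * \<eta> * \<Lambda>) (- int n) * G f \<eta> l 0))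
     = Rc f \<eta> \<Lambda> (Suc n) i1 j1 i2 j2 l
       * (G f \<eta> 0 (int n + 1 - int j1) * G f \<eta> (2 * \<eta> * \<Lambda>) (- int i2 - int n) * G f \<eta> l (int j1)
          / (G f \<eta> 0 (int n + 1) * G f \<eta> (2 * \<eta> * \<Lambda>) (int j1 - int i2 - int n) * G f \<eta> l 0))"
proof -
  have B2: "P f \<eta> 0 (int (Suc n)) (Suc n) = G f \<eta> 0 (int n + 1) * P f \<eta> 0 (int n) n"
    by (rule P_front') simp_all
  have B4: "P f \<eta> 0 (int (Suc n) - int j1) (Suc n - j1) = G f \<eta> 0 (int n + 1 - int j1) * P f \<eta> 0 (int n - int j1) (n - j1)"
    by (rule P_front') (use j1 in simp_all)
  have B7: "P f \<eta> (2 * \<eta> * \<Lambda>) (- int i1) (Suc n - j2) = P f \<eta> (2 * \<eta> * \<Lambda>) (- int i1) (n - j2) * G f \<eta> (2 * \<eta> * \<Lambda>) (int j1 - int i2 - int n)"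
    by (rule P_back') (use j2 cons in simp_all)
  have B8: "P f \<eta> (2 * \<eta> * \<Lambda>) 0 (Suc n) = P f \<eta> (2 * \<eta> * \<Lambda>) 0 n * G f \<eta> (2 * \<eta> * \<Lambda>) (- int n)"
    by (rule P_back') simp_all
  have B9: "P f \<eta> l (int i2) (Suc n - j1) = G f \<eta> l (int i2) * P f \<eta> l (int i2 - 1) (n - j1)"
    by (rule P_front') (use j1 in simp_all)
  have B10: "P f \<eta> l (int j1) (Suc n - j1) = G f \<eta> l (int j1) * P f \<eta> l (int j1 - 1) (n - j1)"
    by (rule P_front') (use j1 in simp_all)
  have B11: "P f \<eta> l (2 * int j1 - int (Suc n) - 1) j1 = P f \<eta> l (2 * int j1 - int n - 1 - 1) j1"
    by simp
  have nz: "P f \<eta> 0 (int j1) j1 \<noteq> 0" "P f \<eta> 0 (int n - int j1) (n - j1) \<noteq> 0" "P f \<eta> 0 (int n) n \<noteq> 0"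
    "P f \<eta> (2 * \<eta> * \<Lambda>) 0 i2 \<noteq> 0" "P f \<eta> (2 * \<eta> * \<Lambda>) 0 n \<noteq> 0"
    "P f \<eta> l (int j1 - 1) (n - j1) \<noteq> 0" "P f \<eta> l (2 * int j1 - int n - 1 - 1) j1 \<noteq> 0"
    "G f \<eta> 0 (int n + 1) \<noteq> 0" "G f \<eta> (2 * \<eta> * \<Lambda>) (int j1 - int i2 - int n) \<noteq> 0"
    "G f \<eta> (2 * \<eta> * \<Lambda>) (- int n) \<noteq> 0" "G f \<eta> l 0 \<noteq> 0" "G f \<eta> l (int j1) \<noteq> 0"
    "G f \<eta> l (int i2) \<noteq> 0" "G f \<eta> 0 (int n + 1 - int j1) \<noteq> 0"
    using j1 by (auto intro!: P0_nz PL_nz Pl_nz[OF g3] G0_nz GL_nz Gl_nz[OF g3])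
  show ?thesis
    unfolding Rc_def P_shift_m B2 B4 B7 B8 B9 B10 B11
    using nz by (simp add: field_simps)
qed

lemma r01:
  assumes g3: "\<forall>k::int. f (l + 2 * \<eta> * of_int k) \<noteq> 0"
    and j1: "j1 = Suc a" "j1 \<le> Suc n" and i2: "i2 = Suc b" and j2: "j2 \<le> n" and cons: "i1 + j1 = i2 + j2"
  shows "Rc f \<eta> \<Lambda> n i1 a b j2 (l + 2 * \<eta>)
       * (G f \<eta> 0 1 / (G f \<eta> (2 * \<eta> * \<Lambda>) (- int n) * G f \<eta> l 0))
     = Rc f \<eta> \<Lambda> (Suc n) i1 j1 i2 j2 l
       * (G f \<eta> 0 (int j1) * G f \<eta> (2 * \<eta> * \<Lambda>) (1 - int i2) * G f \<eta> l (int j1 - (int n + 1))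
          / (G f \<eta> 0 (int n + 1) * G f \<eta> (2 * \<eta> * \<Lambda>) (int j1 - int i2 - int n) * G f \<eta> l 0))"
proof -
  have B1: "G f \<eta> 0 1 powi (int i2 - int i1) = G f \<eta> 0 1 powi (int b - int i1) * G f \<eta> 0 1"
  proof -
    have e: "int i2 - int i1 = (int b - int i1) + 1" using i2 by simp
    have "G f \<eta> 0 1 \<noteq> 0" by (rule G0_nz) simp
    then show ?thesis unfolding e by (intro power_int_add_1) simp
  qed
  have B2: "P f \<eta> 0 (int (Suc n)) (Suc n) = G f \<eta> 0 (int n + 1) * P f \<eta> 0 (int n) n"
    by (rule P_front') simp_all
  have B3: "P f \<eta> 0 (int j1) j1 = G f \<eta> 0 (int j1) * P f \<eta> 0 (int a) a"
    by (rule P_front') (use j1 in simp_all)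
  have B4: "P f \<eta> 0 (int (Suc n) - int j1) (Suc n - j1) = P f \<eta> 0 (int n - int a) (n - a)"
    using j1 by simp
  have B6: "P f \<eta> (2 * \<eta> * \<Lambda>) 0 i2 = P f \<eta> (2 * \<eta> * \<Lambda>) 0 b * G f \<eta> (2 * \<eta> * \<Lambda>) (1 - int i2)"
    by (rule P_back') (use i2 in simp_all)
  have B7: "P f \<eta> (2 * \<eta> * \<Lambda>) (- int i1) (Suc n - j2) = P f \<eta> (2 * \<eta> * \<Lambda>) (- int i1) (n - j2) * G f \<eta> (2 * \<eta> * \<Lambda>) (int j1 - int i2 - int n)"
    by (rule P_back') (use j2 cons in simp_all)
  have B8: "P f \<eta> (2 * \<eta> * \<Lambda>) 0 (Suc n) = P f \<eta> (2 * \<eta> * \<Lambda>) 0 n * G f \<eta> (2 * \<eta> * \<Lambda>) (- int n)"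
    by (rule P_back') simp_all
  have B9: "P f \<eta> l (int i2) (Suc n - j1) = P f \<eta> l (int b + 1) (n - a)"
    using i2 j1 by (simp add: add.commute)
  have B10: "P f \<eta> l (int j1) (Suc n - j1) = P f \<eta> l (int a + 1) (n - a)"
    using j1 by (simp add: add.commute)
  have B11: "P f \<eta> l (2 * int j1 - int (Suc n) - 1) j1 = P f \<eta> l (2 * int a - int n - 1 + 1) a * G f \<eta> l (int j1 - (int n + 1))"
    by (rule P_back'') (use j1 in simp_all)
  have nz: "P f \<eta> 0 (int a) a \<noteq> 0" "P f \<eta> 0 (int n - int a) (n - a) \<noteq> 0" "P f \<eta> 0 (int n) n \<noteq> 0"
    "P f \<eta> (2 * \<eta> * \<Lambda>) 0 b \<noteq> 0" "P f \<eta> (2 * \<eta> * \<Lambda>) 0 n \<noteq> 0"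
    "P f \<eta> l (int a + 1) (n - a) \<noteq> 0" "P f \<eta> l (2 * int a - int n - 1 + 1) a \<noteq> 0"
    "G f \<eta> 0 (int n + 1) \<noteq> 0" "G f \<eta> (2 * \<eta> * \<Lambda>) (int j1 - int i2 - int n) \<noteq> 0"
    "G f \<eta> (2 * \<eta> * \<Lambda>) (- int n) \<noteq> 0" "G f \<eta> l 0 \<noteq> 0" "G f \<eta> l (int j1 - (int n + 1)) \<noteq> 0"
    "G f \<eta> (2 * \<eta> * \<Lambda>) (1 - int i2) \<noteq> 0" "G f \<eta> 0 (int j1) \<noteq> 0" "G f \<eta> 0 1 \<noteq> 0"
    using j1 by (auto intro!: P0_nz PL_nz Pl_nz[OF g3] G0_nz GL_nz Gl_nz[OF g3])
  show ?thesis
    unfolding Rc_def P_shift_p B1 B2 B3 B4 B6 B7 B8 B9 B10 B11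
    using nz by (simp add: field_simps)
qed

lemma r10:
  assumes g3: "\<forall>k::int. f (l + 2 * \<eta> * of_int k) \<noteq> 0"
    and j1: "j1 \<le> n" and j2: "j2 = Suc c" "j2 \<le> Suc n" and cons: "i1 + j1 = i2 + j2"
  shows "Rc f \<eta> \<Lambda> n i1 j1 (Suc i2) c (l - 2 * \<eta>)
       * (G f \<eta> l (int i2 - int n) * G f \<eta> (2 * \<eta> * \<Lambda>) (- int i2) * G f \<eta> 0 (int i2 + 1)
          / (G f \<eta> (2 * \<eta> * \<Lambda>) (- int n) * G f \<eta> l 0 * G f \<eta> 0 1))
     = Rc f \<eta> \<Lambda> (Suc n) i1 j1 i2 j2 l
       * (G f \<eta> 0 (int n + 1 - int j1) * G f \<eta> l (int j1) * G f \<eta> l (int i2 - int n) * G f \<eta> 0 (int i2 + 1)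
          / (G f \<eta> 0 (int n + 1) * G f \<eta> l (int i2 + int j1 - int n) * G f \<eta> l 0))"
proof -
  have B1: "G f \<eta> 0 1 powi (int (Suc i2) - int i1) = G f \<eta> 0 1 powi (int i2 - int i1) * G f \<eta> 0 1"
  proof -
    have e: "int (Suc i2) - int i1 = (int i2 - int i1) + 1" by simp
    have "G f \<eta> 0 1 \<noteq> 0" by (rule G0_nz) simp
    then show ?thesis unfolding e by (intro power_int_add_1) simp
  qed
  have B2: "P f \<eta> 0 (int (Suc n)) (Suc n) = G f \<eta> 0 (int n + 1) * P f \<eta> 0 (int n) n"
    by (rule P_front') simp_all
  have B4: "P f \<eta> 0 (int (Suc n) - int j1) (Suc n - j1) = G f \<eta> 0 (int n + 1 - int j1) * P f \<eta> 0 (int n - int j1) (n - j1)"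
    by (rule P_front') (use j1 in simp_all)
  have B6: "P f \<eta> (2 * \<eta> * \<Lambda>) 0 (Suc i2) = P f \<eta> (2 * \<eta> * \<Lambda>) 0 i2 * G f \<eta> (2 * \<eta> * \<Lambda>) (- int i2)"
    by (rule P_back') simp_all
  have B7: "P f \<eta> (2 * \<eta> * \<Lambda>) (- int i1) (Suc n - j2) = P f \<eta> (2 * \<eta> * \<Lambda>) (- int i1) (n - c)"
    using j2 by simp
  have B8: "P f \<eta> (2 * \<eta> * \<Lambda>) 0 (Suc n) = P f \<eta> (2 * \<eta> * \<Lambda>) 0 n * G f \<eta> (2 * \<eta> * \<Lambda>) (- int n)"
    by (rule P_back') simp_all
  have B9: "P f \<eta> l (int i2) (Suc n - j1) = P f \<eta> l (int (Suc i2) - 1) (n - j1) * G f \<eta> l (int i2 + int j1 - int n)"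
    by (rule P_back'') (use j1 in simp_all)
  have B10: "P f \<eta> l (int j1) (Suc n - j1) = G f \<eta> l (int j1) * P f \<eta> l (int j1 - 1) (n - j1)"
    by (rule P_front') (use j1 in simp_all)
  have B11: "P f \<eta> l (2 * int j1 - int (Suc n) - 1) j1 = P f \<eta> l (2 * int j1 - int n - 1 - 1) j1"
    by simp
  have nz: "P f \<eta> 0 (int j1) j1 \<noteq> 0" "P f \<eta> 0 (int n - int j1) (n - j1) \<noteq> 0" "P f \<eta> 0 (int n) n \<noteq> 0"
    "P f \<eta> (2 * \<eta> * \<Lambda>) 0 i2 \<noteq> 0" "P f \<eta> (2 * \<eta> * \<Lambda>) 0 n \<noteq> 0"
    "P f \<eta> l (int j1 - 1) (n - j1) \<noteq> 0" "P f \<eta> l (2 * int j1 - int n - 1 - 1) j1 \<noteq> 0"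
    "G f \<eta> 0 (int n + 1) \<noteq> 0" "G f \<eta> (2 * \<eta> * \<Lambda>) (- int i2) \<noteq> 0"
    "G f \<eta> (2 * \<eta> * \<Lambda>) (- int n) \<noteq> 0" "G f \<eta> l 0 \<noteq> 0" "G f \<eta> l (int j1) \<noteq> 0"
    "G f \<eta> l (int i2 + int j1 - int n) \<noteq> 0" "G f \<eta> 0 (int n + 1 - int j1) \<noteq> 0" "G f \<eta> 0 1 \<noteq> 0"
    using j1 by (auto intro!: P0_nz PL_nz Pl_nz[OF g3] G0_nz GL_nz Gl_nz[OF g3])
  show ?thesis
    unfolding Rc_def P_shift_m B1 B2 B4 B6 B7 B8 B9 B10 B11
    using nz by (simp add: field_simps)
qed

lemma r11:
  assumes g3: "\<forall>k::int. f (l + 2 * \<eta> * of_int k) \<noteq> 0"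
    and j1: "j1 = Suc a" "j1 \<le> Suc n" and j2: "j2 = Suc c" "j2 \<le> Suc n" and cons: "i1 + j1 = i2 + j2"
  shows "Rc f \<eta> \<Lambda> n i1 a i2 c (l + 2 * \<eta>)
       * (G f \<eta> 0 (int i2 - int n) / (G f \<eta> (2 * \<eta> * \<Lambda>) (- int n) * G f \<eta> l 0))
     = Rc f \<eta> \<Lambda> (Suc n) i1 j1 i2 j2 l
       * (G f \<eta> 0 (int j1) * G f \<eta> l (int i2 + 1) * G f \<eta> l (int j1 - (int n + 1)) * G f \<eta> 0 (int i2 - int n)
          / (G f \<eta> 0 (int n + 1) * G f \<eta> l (int i2 + int j1 - int n) * G f \<eta> l 0))"
proof -
  have B2: "P f \<eta> 0 (int (Suc n)) (Suc n) = G f \<eta> 0 (int n + 1) * P f \<eta> 0 (int n) n"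
    by (rule P_front') simp_all
  have B3: "P f \<eta> 0 (int j1) j1 = G f \<eta> 0 (int j1) * P f \<eta> 0 (int a) a"
    by (rule P_front') (use j1 in simp_all)
  have B4: "P f \<eta> 0 (int (Suc n) - int j1) (Suc n - j1) = P f \<eta> 0 (int n - int a) (n - a)"
    using j1 by simp
  have B7: "P f \<eta> (2 * \<eta> * \<Lambda>) (- int i1) (Suc n - j2) = P f \<eta> (2 * \<eta> * \<Lambda>) (- int i1) (n - c)"
    using j2 by simp
  have B8: "P f \<eta> (2 * \<eta> * \<Lambda>) 0 (Suc n) = P f \<eta> (2 * \<eta> * \<Lambda>) 0 n * G f \<eta> (2 * \<eta> * \<Lambda>) (- int n)"
    by (rule P_back') simp_all
  have sl: "P f \<eta> l (int i2 + 1) (n - a) * G f \<eta> l (int i2 + 1 - int (n - a)) = G f \<eta> l (int i2 + 1) * P f \<eta> l (int i2) (n - a)"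
    by (rule P_slide)
  have B9: "P f \<eta> l (int i2) (Suc n - j1) = P f \<eta> l (int i2 + 1) (n - a) * G f \<eta> l (int i2 + int j1 - int n) / G f \<eta> l (int i2 + 1)"
  proof -
    have X: "int i2 + 1 - int (n - a) = int i2 + int j1 - int n" using j1 by (simp add: of_nat_diff)
    have sl': "P f \<eta> l (int i2 + 1) (n - a) * G f \<eta> l (int i2 + int j1 - int n) = G f \<eta> l (int i2 + 1) * P f \<eta> l (int i2) (n - a)"
      using sl unfolding X .
    have "Suc n - j1 = n - a" using j1 by simp
    then show ?thesis using sl' Gl_nz[OF g3, of "int i2 + 1"] by (simp add: field_simps)
  qed
  have B10: "P f \<eta> l (int j1) (Suc n - j1) = P f \<eta> l (int a + 1) (n - a)"
    using j1 by (simp add: add.commute)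
  have B11: "P f \<eta> l (2 * int j1 - int (Suc n) - 1) j1 = P f \<eta> l (2 * int a - int n - 1 + 1) a * G f \<eta> l (int j1 - (int n + 1))"
    by (rule P_back'') (use j1 in simp_all)
  have nz: "P f \<eta> 0 (int a) a \<noteq> 0" "P f \<eta> 0 (int n - int a) (n - a) \<noteq> 0" "P f \<eta> 0 (int n) n \<noteq> 0"
    "P f \<eta> (2 * \<eta> * \<Lambda>) 0 i2 \<noteq> 0" "P f \<eta> (2 * \<eta> * \<Lambda>) 0 n \<noteq> 0"
    "P f \<eta> l (int a + 1) (n - a) \<noteq> 0" "P f \<eta> l (2 * int a - int n - 1 + 1) a \<noteq> 0"
    "G f \<eta> 0 (int n + 1) \<noteq> 0" "G f \<eta> l (int i2 + 1) \<noteq> 0"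
    "G f \<eta> (2 * \<eta> * \<Lambda>) (- int n) \<noteq> 0" "G f \<eta> l 0 \<noteq> 0" "G f \<eta> l (int j1 - (int n + 1)) \<noteq> 0"
    "G f \<eta> l (int i2 + int j1 - int n) \<noteq> 0" "G f \<eta> 0 (int j1) \<noteq> 0" "G f \<eta> 0 1 \<noteq> 0"
    using j1 by (auto intro!: P0_nz PL_nz Pl_nz[OF g3] G0_nz GL_nz Gl_nz[OF g3])
  show ?thesis
    unfolding Rc_def P_shift_p B2 B3 B4 B7 B8 B9 B10 B11
    using nz by (simp add: field_simps)
qed

end


lemma bin_seqs_finite: "finite (bin_seqs n)"
proof -
  have "bin_seqs n \<subseteq> {xs. set xs \<subseteq> {0,1} \<and> length xs = n}" unfolding bin_seqs_def by auto
  moreover have "finite {xs. set xs \<subseteq> {0::nat,1} \<and> length xs = n}"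
    by (rule finite_lists_length_eq) simp
  ultimately show ?thesis by (rule finite_subset)
qed

lemma bin_seqs_snoc: "xs @ [a] \<in> bin_seqs (Suc n) \<longleftrightarrow> xs \<in> bin_seqs n \<and> a \<in> {0,1}"
  unfolding bin_seqs_def by auto

lemma sum_snoc:
  fixes g :: "nat list \<Rightarrow> complex"
  shows "(\<Sum>zs\<in>{zs \<in> bin_seqs (Suc n). sum_list zs = j}. g zs)
   = (\<Sum>xs\<in>{xs \<in> bin_seqs n. sum_list xs = j}. g (xs @ [0]))
   + (if 1 \<le> j then (\<Sum>xs\<in>{xs \<in> bin_seqs n. sum_list xs = j - 1}. g (xs @ [1])) else 0)"
proof -
  define A where "A = {xs \<in> bin_seqs n. sum_list xs = j}"
  define B where "B = (if 1 \<le> j then {xs \<in> bin_seqs n. sum_list xs = j - 1} else {})"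
  have fA: "finite A" and fB: "finite B" unfolding A_def B_def using bin_seqs_finite by auto
  have S: "{zs \<in> bin_seqs (Suc n). sum_list zs = j} = (\<lambda>xs. xs @ [0]) ` A \<union> (\<lambda>xs. xs @ [1]) ` B"
  proof (intro set_eqI iffI)
    fix zs assume "zs \<in> {zs \<in> bin_seqs (Suc n). sum_list zs = j}"
    then have zs: "length zs = Suc n" "set zs \<subseteq> {0,1}" "sum_list zs = j" unfolding bin_seqs_def by auto
    then obtain xs a where zsd: "zs = xs @ [a]" by (metis length_Suc_conv_rev)
    have xs: "xs \<in> bin_seqs n" using zs zsd unfolding bin_seqs_def by auto
    have "a \<in> {0,1}" using zs zsd by auto
    then show "zs \<in> (\<lambda>xs. xs @ [0]) ` A \<union> (\<lambda>xs. xs @ [1]) ` B"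
    proof
      assume "a = 0" then have "xs \<in> A" using zs zsd xs unfolding A_def by simp
      then show ?thesis using zsd \<open>a = 0\<close> by blast
    next
      assume "a \<in> {1}" then have "a = 1" by simp
      then have "xs \<in> B" using zs zsd xs unfolding B_def by auto
      then show ?thesis using zsd \<open>a = 1\<close> by blast
    qed
  next
    fix zs assume "zs \<in> (\<lambda>xs. xs @ [0]) ` A \<union> (\<lambda>xs. xs @ [1]) ` B"
    then show "zs \<in> {zs \<in> bin_seqs (Suc n). sum_list zs = j}"
      unfolding A_def B_def bin_seqs_def by (auto split: if_splits)
  qed
  have D: "(\<lambda>xs. xs @ [0]) ` A \<inter> (\<lambda>xs. xs @ [1]) ` B = {}" by auto
  have i0: "inj_on (\<lambda>xs. xs @ [0::nat]) A" by (auto simp: inj_on_def)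
  have i1: "inj_on (\<lambda>xs. xs @ [1::nat]) B" by (auto simp: inj_on_def)
  have "(\<Sum>zs\<in>{zs \<in> bin_seqs (Suc n). sum_list zs = j}. g zs)
      = (\<Sum>zs\<in>(\<lambda>xs. xs @ [0]) ` A. g zs) + (\<Sum>zs\<in>(\<lambda>xs. xs @ [1]) ` B. g zs)"
    unfolding S by (rule sum.union_disjoint) (use fA fB D in auto)
  also have "\<dots> = (\<Sum>xs\<in>A. g (xs @ [0])) + (\<Sum>xs\<in>B. g (xs @ [1]))"
    by (simp only: sum.reindex[OF i0] sum.reindex[OF i1] comp_def)
  finally show ?thesis unfolding A_def B_def by simp
qed

lemma WJcol_alt:
  "WJcol f \<eta> \<Lambda> J i1 J1 i2 J2 v l =
    (if ipos i1 J1 J2 (J + 1) = int i2 then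
       (\<Prod>k\<in>{1..J}. W1 f \<eta> \<Lambda> (ipos i1 J1 J2 k) (J1 ! (k - 1)) (ipos i1 J1 J2 (k + 1)) (J2 ! (k - 1))
                         (v + 2 * \<eta> * of_nat (k - 1)) (Phi \<eta> l J J1 k))
     else 0)"
proof (cases "(\<forall>k\<in>{1..J+1}. ipos i1 J1 J2 k \<ge> 0)")
  case True then show ?thesis unfolding WJcol_def by simp
next
  case False
  then obtain k where k: "k \<in> {1..J+1}" "ipos i1 J1 J2 k < 0" by force
  show ?thesis
  proof (cases "ipos i1 J1 J2 (J + 1) = int i2")
    case True
    then have "k \<noteq> J + 1" using k by auto
    then have "k \<in> {1..J}" using k by auto
    moreover have "W1 f \<eta> \<Lambda> (ipos i1 J1 J2 k) (J1 ! (k - 1)) (ipos i1 J1 J2 (k + 1)) (J2 ! (k - 1))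
                         (v + 2 * \<eta> * of_nat (k - 1)) (Phi \<eta> l J J1 k) = 0"
      using k unfolding W1_def by simp
    ultimately have "(\<Prod>k\<in>{1..J}. W1 f \<eta> \<Lambda> (ipos i1 J1 J2 k) (J1 ! (k - 1)) (ipos i1 J1 J2 (k + 1)) (J2 ! (k - 1))
                         (v + 2 * \<eta> * of_nat (k - 1)) (Phi \<eta> l J J1 k)) = 0"
      by (intro prod_zero) auto
    then show ?thesis unfolding WJcol_def using False by simp
  next
    case False
    then show ?thesis unfolding WJcol_def by simp
  qed
qed

lemma ipos_snoc:
  assumes "length xs = n" "length ys = n" "k \<le> Suc n"
  shows "ipos i1 (xs @ [a]) (ys @ [b]) k = ipos i1 xs ys k"
  unfolding ipos_def
proof (intro arg_cong[where f="\<lambda>x. int i1 + x"] sum.cong refl)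
  fix m assume "m \<in> {1..<k}"
  then have "m - 1 < n" using assms by auto
  then show "int ((xs @ [a]) ! (m - 1)) - int ((ys @ [b]) ! (m - 1)) = int (xs ! (m - 1)) - int (ys ! (m - 1))"
    using assms by (simp add: nth_append)
qed

lemma ipos_snoc_last:
  assumes "length xs = n" "length ys = n"
  shows "ipos i1 (xs @ [a]) (ys @ [b]) (Suc (Suc n)) = ipos i1 xs ys (Suc n) + int a - int b"
proof -
  have "ipos i1 (xs @ [a]) (ys @ [b]) (Suc (Suc n)) = ipos i1 (xs @ [a]) (ys @ [b]) (Suc n)
     + (int ((xs @ [a]) ! n) - int ((ys @ [b]) ! n))"
    unfolding ipos_def by simp
  also have "\<dots> = ipos i1 xs ys (Suc n) + int a - int b"
    using ipos_snoc[OF assms, of "Suc n"] assms by (simp add: nth_append)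
  finally show ?thesis .
qed

lemma Phi_snoc:
  assumes "length xs = n" "k \<le> n"
  shows "Phi \<eta> l (Suc n) (xs @ [a]) k = Phi \<eta> (l + (if a = 0 then - 2 * \<eta> else 2 * \<eta>)) n xs k"
proof -
  have "{k+1..Suc n} = insert (Suc n) {k+1..n}" using assms by auto
  then have "(\<Sum>m\<in>{k+1..Suc n}. (if (xs @ [a]) ! (m - 1) = 0 then - 2 * \<eta> else 2 * \<eta>))
     = (if a = 0 then - 2 * \<eta> else 2 * \<eta>) + (\<Sum>m\<in>{k+1..n}. (if (xs @ [a]) ! (m - 1) = 0 then - 2 * \<eta> else 2 * \<eta>))"
    using assms by (simp add: nth_append)
  also have "(\<Sum>m\<in>{k+1..n}. (if (xs @ [a]) ! (m - 1) = 0 then - 2 * \<eta> else 2 * \<eta>))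
      = (\<Sum>m\<in>{k+1..n}. (if xs ! (m - 1) = 0 then - 2 * \<eta> else 2 * \<eta>))"
    by (rule sum.cong) (use assms in \<open>auto simp: nth_append\<close>)
  finally show ?thesis unfolding Phi_def by (simp add: algebra_simps)
qed

lemma Phi_last: "Phi \<eta> l J J1 J = l"
  unfolding Phi_def by simp

lemma WJcol_snoc:
  assumes lx: "length xs = n" and ly: "length ys = n"
  shows "WJcol f \<eta> \<Lambda> (Suc n) i1 (xs @ [a]) i2 (ys @ [b]) v l =
    (if 0 \<le> int i2 - int a + int b then
       WJcol f \<eta> \<Lambda> n i1 xs (nat (int i2 - int a + int b)) ys v (l + (if a = 0 then - 2 * \<eta> else 2 * \<eta>))
       * W1 f \<eta> \<Lambda> (int i2 - int a + int b) a (int i2) b (v + 2 * \<eta> * of_nat n) l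
     else 0)"
proof -
  define l' where "l' = l + (if a = 0 then - 2 * \<eta> else 2 * \<eta>)"
  define I where "I = ipos i1 xs ys (Suc n)"
  define pr where "pr = (\<Prod>k\<in>{1..n}. W1 f \<eta> \<Lambda> (ipos i1 xs ys k) (xs ! (k - 1)) (ipos i1 xs ys (k + 1)) (ys ! (k - 1))
                         (v + 2 * \<eta> * of_nat (k - 1)) (Phi \<eta> l' n xs k))"
  have P1: "(\<Prod>k\<in>{1..Suc n}. W1 f \<eta> \<Lambda> (ipos i1 (xs @ [a]) (ys @ [b]) k) ((xs @ [a]) ! (k - 1))
        (ipos i1 (xs @ [a]) (ys @ [b]) (k + 1)) ((ys @ [b]) ! (k - 1))
        (v + 2 * \<eta> * of_nat (k - 1)) (Phi \<eta> l (Suc n) (xs @ [a]) k))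
     = pr * W1 f \<eta> \<Lambda> I a (I + int a - int b) b (v + 2 * \<eta> * of_nat n) l"
  proof -
    have "(\<Prod>k\<in>{1..Suc n}. W1 f \<eta> \<Lambda> (ipos i1 (xs @ [a]) (ys @ [b]) k) ((xs @ [a]) ! (k - 1))
        (ipos i1 (xs @ [a]) (ys @ [b]) (k + 1)) ((ys @ [b]) ! (k - 1))
        (v + 2 * \<eta> * of_nat (k - 1)) (Phi \<eta> l (Suc n) (xs @ [a]) k))
      = (\<Prod>k\<in>{1..n}. W1 f \<eta> \<Lambda> (ipos i1 (xs @ [a]) (ys @ [b]) k) ((xs @ [a]) ! (k - 1))
        (ipos i1 (xs @ [a]) (ys @ [b]) (k + 1)) ((ys @ [b]) ! (k - 1))
        (v + 2 * \<eta> * of_nat (k - 1)) (Phi \<eta> l (Suc n) (xs @ [a]) k))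
       * W1 f \<eta> \<Lambda> (ipos i1 (xs @ [a]) (ys @ [b]) (Suc n)) ((xs @ [a]) ! n)
        (ipos i1 (xs @ [a]) (ys @ [b]) (Suc n + 1)) ((ys @ [b]) ! n)
        (v + 2 * \<eta> * of_nat n) (Phi \<eta> l (Suc n) (xs @ [a]) (Suc n))"
      by (simp add: prod.cl_ivl_Suc)
    also have "(\<Prod>k\<in>{1..n}. W1 f \<eta> \<Lambda> (ipos i1 (xs @ [a]) (ys @ [b]) k) ((xs @ [a]) ! (k - 1))
        (ipos i1 (xs @ [a]) (ys @ [b]) (k + 1)) ((ys @ [b]) ! (k - 1))
        (v + 2 * \<eta> * of_nat (k - 1)) (Phi \<eta> l (Suc n) (xs @ [a]) k)) = pr"
      unfolding pr_def l'_def
    proof (rule prod.cong[OF refl])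
      fix k assume k: "k \<in> {1..n}"
      then have k1: "k - 1 < n" "k \<le> Suc n" "k + 1 \<le> Suc n" "k \<le> n" by auto
      show "W1 f \<eta> \<Lambda> (ipos i1 (xs @ [a]) (ys @ [b]) k) ((xs @ [a]) ! (k - 1))
        (ipos i1 (xs @ [a]) (ys @ [b]) (k + 1)) ((ys @ [b]) ! (k - 1))
        (v + 2 * \<eta> * of_nat (k - 1)) (Phi \<eta> l (Suc n) (xs @ [a]) k)
        = W1 f \<eta> \<Lambda> (ipos i1 xs ys k) (xs ! (k - 1)) (ipos i1 xs ys (k + 1)) (ys ! (k - 1))
                         (v + 2 * \<eta> * of_nat (k - 1)) (Phi \<eta> (l + (if a = 0 then - 2 * \<eta> else 2 * \<eta>)) n xs k)"
        using ipos_snoc[OF lx ly k1(2)] ipos_snoc[OF lx ly k1(3)] Phi_snoc[OF lx k1(4)] k1 lx ly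
        by (simp add: nth_append)
    qed
    also have "ipos i1 (xs @ [a]) (ys @ [b]) (Suc n) = I"
      unfolding I_def by (rule ipos_snoc[OF lx ly]) simp
    also have "ipos i1 (xs @ [a]) (ys @ [b]) (Suc n + 1) = I + int a - int b"
      unfolding I_def using ipos_snoc_last[OF lx ly] by simp
    also have "Phi \<eta> l (Suc n) (xs @ [a]) (Suc n) = l" by (rule Phi_last)
    finally show ?thesis using lx ly by (simp add: nth_append)
  qed
  have L: "WJcol f \<eta> \<Lambda> (Suc n) i1 (xs @ [a]) i2 (ys @ [b]) v l =
     (if I + int a - int b = int i2 then pr * W1 f \<eta> \<Lambda> I a (I + int a - int b) b (v + 2 * \<eta> * of_nat n) l else 0)"
    unfolding WJcol_alt P1 using ipos_snoc_last[OF lx ly] unfolding I_def by simp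
  have R: "WJcol f \<eta> \<Lambda> n i1 xs i' ys v l' = (if I = int i' then pr else 0)" for i'
    unfolding WJcol_alt pr_def I_def by simp
  show ?thesis
  proof (cases "I + int a - int b = int i2")
    case True
    then have Ieq: "I = int i2 - int a + int b" by simp
    show ?thesis
    proof (cases "0 \<le> int i2 - int a + int b")
      case True
      then show ?thesis unfolding L R[unfolded l'_def] using Ieq by simp
    next
      case False
      then have "I < 0" using Ieq by simp
      then have "W1 f \<eta> \<Lambda> I a (I + int a - int b) b (v + 2 * \<eta> * of_nat n) l = 0" unfolding W1_def by simp
      then show ?thesis unfolding L using False Ieq by simp
    qed
  next
    case False
    then show ?thesis unfolding L R[unfolded l'_def] by auto
  qed
qed


lemma w00: "0 \<le> k \<Longrightarrow> d = - k - int n \<Longrightarrow>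
  W1 f \<eta> \<Lambda> k 0 k 0 (- \<eta> * \<Lambda> + 2 * \<eta> * of_nat n) l
  = G f \<eta> (2 * \<eta> * \<Lambda>) d * G f \<eta> l k / (G f \<eta> (2 * \<eta> * \<Lambda>) (- int n) * G f \<eta> l 0)"
  by (hypsubst_thin+, unfold W1_def G_def, simp add: algebra_simps)

lemma w10: "0 \<le> k \<Longrightarrow> k' = k + 1 \<Longrightarrow> d = k + 1 + int n \<Longrightarrow>
  W1 f \<eta> \<Lambda> k 1 k' 0 (- \<eta> * \<Lambda> + 2 * \<eta> * of_nat n) l
  = G f \<eta> (l - 2 * \<eta> * \<Lambda>) d * G f \<eta> 0 1 / (G f \<eta> (2 * \<eta> * \<Lambda>) (- int n) * G f \<eta> l 0)"
  by (hypsubst_thin+, unfold W1_def G_def, simp add: algebra_simps)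

lemma w01: "1 \<le> k \<Longrightarrow> k' = k - 1 \<Longrightarrow> d1 = k - 1 - int n \<Longrightarrow> d2 = 1 - k \<Longrightarrow>
  W1 f \<eta> \<Lambda> k 0 k' 1 (- \<eta> * \<Lambda> + 2 * \<eta> * of_nat n) l
  = G f \<eta> l d1 * G f \<eta> (2 * \<eta> * \<Lambda>) d2 * G f \<eta> 0 k / (G f \<eta> (2 * \<eta> * \<Lambda>) (- int n) * G f \<eta> l 0 * G f \<eta> 0 1)"
  by (hypsubst_thin+, unfold W1_def G_def, simp add: algebra_simps)

lemma w11: "0 \<le> k \<Longrightarrow> d = k - int n \<Longrightarrow>
  W1 f \<eta> \<Lambda> k 1 k 1 (- \<eta> * \<Lambda> + 2 * \<eta> * of_nat n) l
  = G f \<eta> 0 d * G f \<eta> (l - 2 * \<eta> * \<Lambda>) k / (G f \<eta> (2 * \<eta> * \<Lambda>) (- int n) * G f \<eta> l 0)"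
  by (hypsubst_thin+, unfold W1_def G_def, simp add: algebra_simps)


definition Rg :: "(complex \<Rightarrow> complex) \<Rightarrow> complex \<Rightarrow> complex \<Rightarrow> nat \<Rightarrow> nat \<Rightarrow> nat \<Rightarrow> nat \<Rightarrow> nat \<Rightarrow> complex \<Rightarrow> complex" where
  "Rg f \<eta> \<Lambda> n i1 j1 i2 j2 l = Rc f \<eta> \<Lambda> n i1 j1 i2 j2 l * P f \<eta> 0 (int i1) j2
      * P f \<eta> (l - 2 * \<eta> * \<Lambda>) (int i2 + int j1 - 1) j1"

lemma P0_zero: "f 0 = 0 \<Longrightarrow> i1 < j2 \<Longrightarrow> P f \<eta> 0 (int i1) j2 = 0"
  unfolding P_def by (rule prod_zero) (auto simp: G_def intro!: bexI[of _ i1])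

lemma G00: "f 0 = 0 \<Longrightarrow> G f \<eta> 0 0 = 0" unfolding G_def by simp

lemma base_m: "(l - 2 * \<eta>) - 2 * \<eta> * \<Lambda> = (l - 2 * \<eta> * \<Lambda>) - 2 * (\<eta>::complex)" by simp
lemma base_p: "(l + 2 * \<eta>) - 2 * \<eta> * \<Lambda> = (l - 2 * \<eta> * \<Lambda>) + 2 * (\<eta>::complex)" by simp

context gen
begin

lemma f0: "detprop f \<Longrightarrow> f 0 = 0"
proof -
  assume d: "detprop f"
  have "f (2 * \<eta> * of_int 1) \<noteq> 0" using g1[rule_format, of 1] by simp
  then show ?thesis by (rule det_f0[OF d])
qed

lemma rec_c0:
  assumes det: "detprop f" and g3: "\<forall>k::int. f (l + 2 * \<eta> * of_int k) \<noteq> 0"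
    and j2: "j2 \<le> n" and j1: "j1 \<le> Suc n" and cons: "i1 + j1 = i2 + j2"
  shows "Rg f \<eta> \<Lambda> (Suc n) i1 j1 i2 j2 l =
     (if j1 \<le> n then Rg f \<eta> \<Lambda> n i1 j1 i2 j2 (l - 2 * \<eta>) * W1 f \<eta> \<Lambda> (int i2) 0 (int i2) 0 (- \<eta> * \<Lambda> + 2 * \<eta> * of_nat n) l else 0)
   + (if 1 \<le> j1 \<and> 1 \<le> i2 then Rg f \<eta> \<Lambda> n i1 (j1 - 1) (i2 - 1) j2 (l + 2 * \<eta>) * W1 f \<eta> \<Lambda> (int i2 - 1) 1 (int i2) 0 (- \<eta> * \<Lambda> + 2 * \<eta> * of_nat n) l else 0)"
proof -
  have f0: "f 0 = 0" by (rule f0[OF det])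
  have W00: "W1 f \<eta> \<Lambda> (int i2) 0 (int i2) 0 (- \<eta> * \<Lambda> + 2 * \<eta> * of_nat n) l
     = G f \<eta> (2 * \<eta> * \<Lambda>) (- int i2 - int n) * G f \<eta> l (int i2) / (G f \<eta> (2 * \<eta> * \<Lambda>) (- int n) * G f \<eta> l 0)"
    by (rule w00) simp_all
  have cases: "P" if z: "i1 < j2 \<Longrightarrow> P" and j0: "j2 \<le> i1 \<Longrightarrow> j1 = 0 \<Longrightarrow> P"
     and a: "\<And>a b. j2 \<le> i1 \<Longrightarrow> j1 = Suc a \<Longrightarrow> i2 = Suc b \<Longrightarrow> P" for P
  proof (cases "i1 < j2")
    case True then show ?thesis by (rule z)
  next
    case False
    show ?thesis
    proof (cases j1)
      case 0 then show ?thesis using False by (intro j0) simp_all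
    next
      case (Suc a')
      have "i2 \<noteq> 0" using cons False Suc by simp
      then obtain b' where "i2 = Suc b'" by (cases i2) simp_all
      then show ?thesis using False Suc by (intro a) simp_all
    qed
  qed
  show ?thesis
  proof (rule cases)
    assume z: "i1 < j2"
    then show ?thesis unfolding Rg_def using P0_zero[where f=f and \<eta>=\<eta>, OF f0 z] by simp
  next
    assume j0: "j2 \<le> i1" "j1 = 0"
    have nz: "G f \<eta> 0 (int n + 1) \<noteq> 0" "G f \<eta> (2 * \<eta> * \<Lambda>) (- int i2 - int n) \<noteq> 0" "G f \<eta> l 0 \<noteq> 0"
      by (auto intro!: G0_nz GL_nz Gl_nz[OF g3])
    have r: "Rc f \<eta> \<Lambda> n i1 j1 i2 j2 (l - 2 * \<eta>)
       * (G f \<eta> (2 * \<eta> * \<Lambda>) (- int i2 - int n) * G f \<eta> l (int i2) / (G f \<eta> (2 * \<eta> * \<Lambda>) (- int n) * G f \<eta> l 0))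
     = Rc f \<eta> \<Lambda> (Suc n) i1 j1 i2 j2 l"
      using r00[OF g3 _ j2 cons] j0 nz by simp
    show ?thesis unfolding Rg_def W00 using j0 r[symmetric] by simp
  next
    fix a b assume a: "j2 \<le> i1" "j1 = Suc a" "i2 = Suc b"
    define C where "C = P f \<eta> (l - 2 * \<eta> * \<Lambda>) (int i2 + int j1 - 2) a"
    define R where "R = Rc f \<eta> \<Lambda> (Suc n) i1 j1 i2 j2 l"
    define Q where "Q = P f \<eta> 0 (int i1) j2"
    define D where "D = G f \<eta> 0 (int n + 1) * G f \<eta> (2 * \<eta> * \<Lambda>) (int j1 - int i2 - int n) * G f \<eta> l 0"
    define t0 where "t0 = G f \<eta> 0 (int n + 1 - int j1) * G f \<eta> (2 * \<eta> * \<Lambda>) (- int i2 - int n) * G f \<eta> l (int j1)"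
    define t1 where "t1 = G f \<eta> 0 (int j1) * G f \<eta> (2 * \<eta> * \<Lambda>) (1 - int i2) * G f \<eta> l (int j1 - (int n + 1))"
    have Dnz: "D \<noteq> 0" unfolding D_def by (auto intro!: G0_nz GL_nz Gl_nz[OF g3])
    have id: "D * G f \<eta> (l - 2 * \<eta> * \<Lambda>) (int i2 + int j1 - 1)
       = t0 * G f \<eta> (l - 2 * \<eta> * \<Lambda>) (int i2 - 1) + t1 * G f \<eta> (l - 2 * \<eta> * \<Lambda>) (int n + int i2)"
    proof -
      have nz1: "f (2 * \<eta> * of_int 1) \<noteq> 0" using g1[rule_format, of 1] by simp
      show ?thesis
        unfolding D_def t0_def t1_def
        using ident_c0[where f=f and i="int i2" and j="int j1" and N="int n" and \<eta>=\<eta> and \<Lambda>=\<Lambda> and l=l, OF det nz1]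
        by (simp add: algebra_simps)
    qed
    have L: "Rg f \<eta> \<Lambda> (Suc n) i1 j1 i2 j2 l = R * Q * (G f \<eta> (l - 2 * \<eta> * \<Lambda>) (int i2 + int j1 - 1) * C)"
    proof -
      have "P f \<eta> (l - 2 * \<eta> * \<Lambda>) (int i2 + int j1 - 1) j1 = G f \<eta> (l - 2 * \<eta> * \<Lambda>) (int i2 + int j1 - 1) * C"
        unfolding C_def by (rule P_front') (use a in simp_all)
      then show ?thesis unfolding Rg_def R_def Q_def by simp
    qed
    have T0: "(if j1 \<le> n then Rg f \<eta> \<Lambda> n i1 j1 i2 j2 (l - 2 * \<eta>) * W1 f \<eta> \<Lambda> (int i2) 0 (int i2) 0 (- \<eta> * \<Lambda> + 2 * \<eta> * of_nat n) l else 0)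
       = R * Q * (t0 / D * (C * G f \<eta> (l - 2 * \<eta> * \<Lambda>) (int i2 - 1)))"
    proof (cases "j1 \<le> n")
      case True
      have pm: "P f \<eta> (l - 2 * \<eta> - 2 * \<eta> * \<Lambda>) (int i2 + int j1 - 1) j1 = C * G f \<eta> (l - 2 * \<eta> * \<Lambda>) (int i2 - 1)"
        unfolding base_m P_shift_m C_def by (rule P_back'') (use a in simp_all)
      have r: "Rc f \<eta> \<Lambda> n i1 j1 i2 j2 (l - 2 * \<eta>)
       * (G f \<eta> (2 * \<eta> * \<Lambda>) (- int i2 - int n) * G f \<eta> l (int i2) / (G f \<eta> (2 * \<eta> * \<Lambda>) (- int n) * G f \<eta> l 0))
        = R * (t0 / D)"
        unfolding R_def t0_def D_def by (rule r00[OF g3 True j2 cons])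
      have "Rg f \<eta> \<Lambda> n i1 j1 i2 j2 (l - 2 * \<eta>) * W1 f \<eta> \<Lambda> (int i2) 0 (int i2) 0 (- \<eta> * \<Lambda> + 2 * \<eta> * of_nat n) l
        = (Rc f \<eta> \<Lambda> n i1 j1 i2 j2 (l - 2 * \<eta>)
       * (G f \<eta> (2 * \<eta> * \<Lambda>) (- int i2 - int n) * G f \<eta> l (int i2) / (G f \<eta> (2 * \<eta> * \<Lambda>) (- int n) * G f \<eta> l 0)))
          * Q * (C * G f \<eta> (l - 2 * \<eta> * \<Lambda>) (int i2 - 1))"
        unfolding Rg_def W00 pm Q_def[symmetric] by (simp only: mult_ac)
      also have "\<dots> = R * Q * (t0 / D * (C * G f \<eta> (l - 2 * \<eta> * \<Lambda>) (int i2 - 1)))"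
        unfolding r by (simp only: mult_ac)
      finally show ?thesis using True by simp
    next
      case False
      then have "j1 = Suc n" using j1 by simp
      then have "t0 = 0" unfolding t0_def using G00[where f=f and \<eta>=\<eta>, OF f0] by simp
      then show ?thesis using False by simp
    qed
    have T1: "(if 1 \<le> j1 \<and> 1 \<le> i2 then Rg f \<eta> \<Lambda> n i1 (j1 - 1) (i2 - 1) j2 (l + 2 * \<eta>) * W1 f \<eta> \<Lambda> (int i2 - 1) 1 (int i2) 0 (- \<eta> * \<Lambda> + 2 * \<eta> * of_nat n) l else 0)
       = R * Q * (t1 / D * (C * G f \<eta> (l - 2 * \<eta> * \<Lambda>) (int n + int i2)))"
    proof -
      have W10: "W1 f \<eta> \<Lambda> (int i2 - 1) 1 (int i2) 0 (- \<eta> * \<Lambda> + 2 * \<eta> * of_nat n) l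
         = G f \<eta> (l - 2 * \<eta> * \<Lambda>) (int n + int i2) * G f \<eta> 0 1 / (G f \<eta> (2 * \<eta> * \<Lambda>) (- int n) * G f \<eta> l 0)"
        by (rule w10) (use a in simp_all)
      have pm: "P f \<eta> (l + 2 * \<eta> - 2 * \<eta> * \<Lambda>) (int b + int a - 1) a = C"
        unfolding base_p P_shift_p C_def using a by simp
      have r: "Rc f \<eta> \<Lambda> n i1 a b j2 (l + 2 * \<eta>) * (G f \<eta> 0 1 / (G f \<eta> (2 * \<eta> * \<Lambda>) (- int n) * G f \<eta> l 0))
          = R * (t1 / D)"
        unfolding R_def t1_def D_def by (rule r01[OF g3 a(2) j1 a(3) j2 cons])
      have e: "j1 - 1 = a" "i2 - 1 = b" using a by simp_all
      have "Rg f \<eta> \<Lambda> n i1 (j1 - 1) (i2 - 1) j2 (l + 2 * \<eta>) * W1 f \<eta> \<Lambda> (int i2 - 1) 1 (int i2) 0 (- \<eta> * \<Lambda> + 2 * \<eta> * of_nat n) l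
         = (Rc f \<eta> \<Lambda> n i1 a b j2 (l + 2 * \<eta>) * (G f \<eta> 0 1 / (G f \<eta> (2 * \<eta> * \<Lambda>) (- int n) * G f \<eta> l 0)))
           * Q * (C * G f \<eta> (l - 2 * \<eta> * \<Lambda>) (int n + int i2))"
        unfolding Rg_def W10 e pm Q_def[symmetric] by (simp only: mult_ac times_divide_eq_right times_divide_eq_left)
      also have "\<dots> = R * Q * (t1 / D * (C * G f \<eta> (l - 2 * \<eta> * \<Lambda>) (int n + int i2)))"
        unfolding r by (simp only: mult_ac)
      finally show ?thesis using a by simp
    qed
    have "R * Q * (G f \<eta> (l - 2 * \<eta> * \<Lambda>) (int i2 + int j1 - 1) * C)
       = R * Q * (t0 / D * (C * G f \<eta> (l - 2 * \<eta> * \<Lambda>) (int i2 - 1))) + R * Q * (t1 / D * (C * G f \<eta> (l - 2 * \<eta> * \<Lambda>) (int n + int i2)))"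
    proof -
      have "G f \<eta> (l - 2 * \<eta> * \<Lambda>) (int i2 + int j1 - 1) = t0 / D * G f \<eta> (l - 2 * \<eta> * \<Lambda>) (int i2 - 1) + t1 / D * G f \<eta> (l - 2 * \<eta> * \<Lambda>) (int n + int i2)"
        using id Dnz by (simp add: field_simps)
      then show ?thesis by (simp add: algebra_simps)
    qed
    then show ?thesis unfolding L T0 T1 .
  qed
qed

lemma rec_c1:
  assumes det: "detprop f" and g3: "\<forall>k::int. f (l + 2 * \<eta> * of_int k) \<noteq> 0"
    and j2: "j2 = Suc c" "j2 \<le> Suc n" and j1: "j1 \<le> Suc n" and cons: "i1 + j1 = i2 + j2"
  shows "Rg f \<eta> \<Lambda> (Suc n) i1 j1 i2 j2 l =
     (if j1 \<le> n then Rg f \<eta> \<Lambda> n i1 j1 (Suc i2) c (l - 2 * \<eta>) * W1 f \<eta> \<Lambda> (int i2 + 1) 0 (int i2) 1 (- \<eta> * \<Lambda> + 2 * \<eta> * of_nat n) l else 0)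
   + (if 1 \<le> j1 then Rg f \<eta> \<Lambda> n i1 (j1 - 1) i2 c (l + 2 * \<eta>) * W1 f \<eta> \<Lambda> (int i2) 1 (int i2) 1 (- \<eta> * \<Lambda> + 2 * \<eta> * of_nat n) l else 0)"
proof -
  have f0: "f 0 = 0" by (rule f0[OF det])
  define Q where "Q = P f \<eta> 0 (int i1) c"
  define E where "E = P f \<eta> (l - 2 * \<eta> * \<Lambda>) (int i2 + int j1 - 1) j1"
  define R where "R = Rc f \<eta> \<Lambda> (Suc n) i1 j1 i2 j2 l"
  define D where "D = G f \<eta> 0 (int n + 1) * G f \<eta> l (int i2 + int j1 - int n) * G f \<eta> l 0"
  define t0 where "t0 = G f \<eta> 0 (int n + 1 - int j1) * G f \<eta> l (int j1) * G f \<eta> l (int i2 - int n) * G f \<eta> 0 (int i2 + 1)"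
  define t1 where "t1 = G f \<eta> 0 (int j1) * G f \<eta> l (int i2 + 1) * G f \<eta> l (int j1 - (int n + 1)) * G f \<eta> 0 (int i2 - int n)"
  have Dnz: "D \<noteq> 0" unfolding D_def by (auto intro!: G0_nz GL_nz Gl_nz[OF g3])
  have id: "G f \<eta> 0 (int i1 - int c) * D = t0 + t1"
  proof -
    have nz1: "f (2 * \<eta> * of_int 1) \<noteq> 0" using g1[rule_format, of 1] by simp
    have e: "int i2 - int j1 + 1 = int i1 - int c" using cons j2 by simp
    show ?thesis
      unfolding D_def t0_def t1_def
      using ident_c1[where f=f and i="int i2" and j="int j1" and N="int n" and \<eta>=\<eta> and l=l, OF det nz1]
      unfolding e by (simp add: algebra_simps)
  qed
  have L: "Rg f \<eta> \<Lambda> (Suc n) i1 j1 i2 j2 l = R * Q * (G f \<eta> 0 (int i1 - int c) * E)"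
  proof -
    have "P f \<eta> 0 (int i1) j2 = Q * G f \<eta> 0 (int i1 - int c)"
      unfolding Q_def by (rule P_back'') (use j2 in simp_all)
    then show ?thesis unfolding Rg_def R_def E_def by (simp only: mult_ac)
  qed
  have T0: "(if j1 \<le> n then Rg f \<eta> \<Lambda> n i1 j1 (Suc i2) c (l - 2 * \<eta>) * W1 f \<eta> \<Lambda> (int i2 + 1) 0 (int i2) 1 (- \<eta> * \<Lambda> + 2 * \<eta> * of_nat n) l else 0)
     = R * Q * (t0 / D * E)"
  proof (cases "j1 \<le> n")
    case True
    have W01: "W1 f \<eta> \<Lambda> (int i2 + 1) 0 (int i2) 1 (- \<eta> * \<Lambda> + 2 * \<eta> * of_nat n) l
       = G f \<eta> l (int i2 - int n) * G f \<eta> (2 * \<eta> * \<Lambda>) (- int i2) * G f \<eta> 0 (int i2 + 1)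
          / (G f \<eta> (2 * \<eta> * \<Lambda>) (- int n) * G f \<eta> l 0 * G f \<eta> 0 1)"
      by (rule w01) simp_all
    have pm: "P f \<eta> (l - 2 * \<eta> - 2 * \<eta> * \<Lambda>) (int (Suc i2) + int j1 - 1) j1 = E"
      unfolding base_m P_shift_m E_def by simp
    have r: "Rc f \<eta> \<Lambda> n i1 j1 (Suc i2) c (l - 2 * \<eta>)
       * (G f \<eta> l (int i2 - int n) * G f \<eta> (2 * \<eta> * \<Lambda>) (- int i2) * G f \<eta> 0 (int i2 + 1)
          / (G f \<eta> (2 * \<eta> * \<Lambda>) (- int n) * G f \<eta> l 0 * G f \<eta> 0 1)) = R * (t0 / D)"
      unfolding R_def t0_def D_def by (rule r10[OF g3 True j2 cons])
    have "Rg f \<eta> \<Lambda> n i1 j1 (Suc i2) c (l - 2 * \<eta>) * W1 f \<eta> \<Lambda> (int i2 + 1) 0 (int i2) 1 (- \<eta> * \<Lambda> + 2 * \<eta> * of_nat n) l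
       = (Rc f \<eta> \<Lambda> n i1 j1 (Suc i2) c (l - 2 * \<eta>)
       * (G f \<eta> l (int i2 - int n) * G f \<eta> (2 * \<eta> * \<Lambda>) (- int i2) * G f \<eta> 0 (int i2 + 1)
          / (G f \<eta> (2 * \<eta> * \<Lambda>) (- int n) * G f \<eta> l 0 * G f \<eta> 0 1))) * Q * E"
      unfolding Rg_def W01 pm Q_def[symmetric] by (simp only: mult_ac)
    also have "\<dots> = R * Q * (t0 / D * E)" unfolding r by (simp only: mult_ac)
    finally show ?thesis using True by simp
  next
    case False
    then have "j1 = Suc n" using j1 by simp
    then have "t0 = 0" unfolding t0_def using G00[where f=f and \<eta>=\<eta>, OF f0] by simp
    then show ?thesis using False by simp
  qed
  have T1: "(if 1 \<le> j1 then Rg f \<eta> \<Lambda> n i1 (j1 - 1) i2 c (l + 2 * \<eta>) * W1 f \<eta> \<Lambda> (int i2) 1 (int i2) 1 (- \<eta> * \<Lambda> + 2 * \<eta> * of_nat n) l else 0)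
     = R * Q * (t1 / D * E)"
  proof (cases j1)
    case 0
    then have "t1 = 0" unfolding t1_def using G00[where f=f and \<eta>=\<eta>, OF f0] by simp
    then show ?thesis using 0 by simp
  next
    case (Suc a)
    have W11: "W1 f \<eta> \<Lambda> (int i2) 1 (int i2) 1 (- \<eta> * \<Lambda> + 2 * \<eta> * of_nat n) l
       = G f \<eta> 0 (int i2 - int n) * G f \<eta> (l - 2 * \<eta> * \<Lambda>) (int i2) / (G f \<eta> (2 * \<eta> * \<Lambda>) (- int n) * G f \<eta> l 0)"
      by (rule w11) simp_all
    have pE: "E = P f \<eta> (l - 2 * \<eta> * \<Lambda>) (int i2 + int a - 1 + 1) a * G f \<eta> (l - 2 * \<eta> * \<Lambda>) (int i2)"
      unfolding E_def by (rule P_back'') (use Suc in simp_all)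
    have pm: "P f \<eta> (l + 2 * \<eta> - 2 * \<eta> * \<Lambda>) (int i2 + int a - 1) a = P f \<eta> (l - 2 * \<eta> * \<Lambda>) (int i2 + int a - 1 + 1) a"
      unfolding base_p P_shift_p ..
    have r: "Rc f \<eta> \<Lambda> n i1 a i2 c (l + 2 * \<eta>)
       * (G f \<eta> 0 (int i2 - int n) / (G f \<eta> (2 * \<eta> * \<Lambda>) (- int n) * G f \<eta> l 0)) = R * (t1 / D)"
      unfolding R_def t1_def D_def by (rule r11[OF g3 Suc j1 j2 cons])
    have e: "j1 - 1 = a" using Suc by simp
    have "Rg f \<eta> \<Lambda> n i1 (j1 - 1) i2 c (l + 2 * \<eta>) * W1 f \<eta> \<Lambda> (int i2) 1 (int i2) 1 (- \<eta> * \<Lambda> + 2 * \<eta> * of_nat n) l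
       = (Rc f \<eta> \<Lambda> n i1 a i2 c (l + 2 * \<eta>)
       * (G f \<eta> 0 (int i2 - int n) / (G f \<eta> (2 * \<eta> * \<Lambda>) (- int n) * G f \<eta> l 0))) * Q * E"
      unfolding Rg_def W11 e pm pE Q_def[symmetric] by (simp only: mult_ac times_divide_eq_right times_divide_eq_left)
    also have "\<dots> = R * Q * (t1 / D * E)" unfolding r by (simp only: mult_ac)
    finally show ?thesis using Suc by simp
  qed
  have "R * Q * (G f \<eta> 0 (int i1 - int c) * E) = R * Q * (t0 / D * E) + R * Q * (t1 / D * E)"
  proof -
    have "G f \<eta> 0 (int i1 - int c) = t0 / D + t1 / D" using id Dnz by (simp add: field_simps)
    then show ?thesis by (simp add: algebra_simps)
  qed
  then show ?thesis unfolding L T0 T1 .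
qed

end


lemma sum_list_bin_le: "set xs \<subseteq> {0, 1} \<Longrightarrow> sum_list xs \<le> length (xs :: nat list)"
  by (induction xs) auto

lemma bin_sum_le: "xs \<in> bin_seqs n \<Longrightarrow> sum_list xs \<le> n"
  unfolding bin_seqs_def using sum_list_bin_le by auto

lemma g3_m: "\<forall>k::int. f (l + 2 * \<eta> * of_int k) \<noteq> 0 \<Longrightarrow> \<forall>k::int. f ((l - 2 * \<eta>) + 2 * \<eta> * of_int k) \<noteq> 0"
proof
  fix k :: int assume h: "\<forall>k::int. f (l + 2 * \<eta> * of_int k) \<noteq> 0"
  have "(l - 2 * \<eta>) + 2 * \<eta> * of_int k = l + 2 * \<eta> * of_int (k - 1)" by (simp add: algebra_simps)
  then show "f ((l - 2 * \<eta>) + 2 * \<eta> * of_int k) \<noteq> 0" using h by metis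
qed

lemma g3_p: "\<forall>k::int. f (l + 2 * \<eta> * of_int k) \<noteq> 0 \<Longrightarrow> \<forall>k::int. f ((l + 2 * \<eta>) + 2 * \<eta> * of_int k) \<noteq> 0"
proof
  fix k :: int assume h: "\<forall>k::int. f (l + 2 * \<eta> * of_int k) \<noteq> 0"
  have "(l + 2 * \<eta>) + 2 * \<eta> * of_int k = l + 2 * \<eta> * of_int (k + 1)" by (simp add: algebra_simps)
  then show "f ((l + 2 * \<eta>) + 2 * \<eta> * of_int k) \<noteq> 0" using h by metis
qed

lemma WJcol_0: "WJcol f \<eta> \<Lambda> 0 i1 [] i1 [] v l = 1"
  by (simp add: WJcol_def ipos_def)

context gen
begin

lemma colsum:
  assumes det: "detprop f"
  shows "ys \<in> bin_seqs n \<Longrightarrow> sum_list ys = j2 \<Longrightarrow> j1 \<le> n \<Longrightarrow> i1 + j1 = i2 + j2 \<Longrightarrow>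
    \<forall>k::int. f (l + 2 * \<eta> * of_int k) \<noteq> 0 \<Longrightarrow>
    (\<Sum>xs\<in>{xs \<in> bin_seqs n. sum_list xs = j1}. WJcol f \<eta> \<Lambda> n i1 xs i2 ys (- \<eta> * \<Lambda>) l)
      = Rg f \<eta> \<Lambda> n i1 j1 i2 j2 l"
proof (induction n arbitrary: ys j1 j2 i2 l)
  case 0
  then have ys: "ys = []" and j: "j2 = 0" "j1 = 0" "i2 = i1" unfolding bin_seqs_def by auto
  have S: "{xs \<in> bin_seqs 0. sum_list xs = 0} = {[]}" unfolding bin_seqs_def by auto
  have W: "WJcol f \<eta> \<Lambda> 0 i1 [] i1 [] (- \<eta> * \<Lambda>) l = 1"
    by (rule WJcol_0)
  have R: "Rg f \<eta> \<Lambda> 0 i1 0 i1 0 l = 1"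
    unfolding Rg_def Rc_def using PL_nz[of 0 i1] by simp
  show ?case unfolding ys j S R by (simp add: WJcol_0)
next
  case (Suc n)
  have g3: "\<forall>k::int. f (l + 2 * \<eta> * of_int k) \<noteq> 0" by (rule Suc.prems(5))
  from Suc.prems(1) have "length ys = Suc n" unfolding bin_seqs_def by simp
  then obtain ys' b where ysd: "ys = ys' @ [b]" by (metis length_Suc_conv_rev)
  have ys': "ys' \<in> bin_seqs n" and b: "b \<in> {0,1}" using Suc.prems(1) unfolding ysd bin_seqs_snoc by auto
  have lys': "length ys' = n" using ys' unfolding bin_seqs_def by simp
  have j2: "j2 = sum_list ys' + b" using Suc.prems(2) ysd by simp
  have sle: "sum_list ys' \<le> n" by (rule bin_sum_le[OF ys'])
  define V where "V = - \<eta> * \<Lambda> + 2 * \<eta> * of_nat n"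
  have A0: "(\<Sum>xs\<in>{xs \<in> bin_seqs n. sum_list xs = j1}. WJcol f \<eta> \<Lambda> (Suc n) i1 (xs @ [0]) i2 ys (- \<eta> * \<Lambda>) l)
    = (if j1 \<le> n then Rg f \<eta> \<Lambda> n i1 j1 (i2 + b) (sum_list ys') (l - 2 * \<eta>) else 0)
      * W1 f \<eta> \<Lambda> (int i2 + int b) 0 (int i2) b V l"
  proof -
    have "(\<Sum>xs\<in>{xs \<in> bin_seqs n. sum_list xs = j1}. WJcol f \<eta> \<Lambda> (Suc n) i1 (xs @ [0]) i2 ys (- \<eta> * \<Lambda>) l)
       = (\<Sum>xs\<in>{xs \<in> bin_seqs n. sum_list xs = j1}. WJcol f \<eta> \<Lambda> n i1 xs (i2 + b) ys' (- \<eta> * \<Lambda>) (l - 2 * \<eta>)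
           * W1 f \<eta> \<Lambda> (int i2 + int b) 0 (int i2) b V l)"
    proof (rule sum.cong[OF refl])
      fix xs assume "xs \<in> {xs \<in> bin_seqs n. sum_list xs = j1}"
      then have lx: "length xs = n" unfolding bin_seqs_def by simp
      show "WJcol f \<eta> \<Lambda> (Suc n) i1 (xs @ [0]) i2 ys (- \<eta> * \<Lambda>) l
         = WJcol f \<eta> \<Lambda> n i1 xs (i2 + b) ys' (- \<eta> * \<Lambda>) (l - 2 * \<eta>) * W1 f \<eta> \<Lambda> (int i2 + int b) 0 (int i2) b V l"
        unfolding ysd WJcol_snoc[OF lx lys'] V_def by (simp add: nat_add_distrib)
    qed
    also have "\<dots> = (\<Sum>xs\<in>{xs \<in> bin_seqs n. sum_list xs = j1}. WJcol f \<eta> \<Lambda> n i1 xs (i2 + b) ys' (- \<eta> * \<Lambda>) (l - 2 * \<eta>))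
           * W1 f \<eta> \<Lambda> (int i2 + int b) 0 (int i2) b V l"
      by (rule sum_distrib_right[symmetric])
    also have "(\<Sum>xs\<in>{xs \<in> bin_seqs n. sum_list xs = j1}. WJcol f \<eta> \<Lambda> n i1 xs (i2 + b) ys' (- \<eta> * \<Lambda>) (l - 2 * \<eta>))
       = (if j1 \<le> n then Rg f \<eta> \<Lambda> n i1 j1 (i2 + b) (sum_list ys') (l - 2 * \<eta>) else 0)"
    proof (cases "j1 \<le> n")
      case True
      have c: "i1 + j1 = i2 + b + sum_list ys'" using Suc.prems(4) j2 by simp
      show ?thesis using True Suc.IH[OF ys' refl True c g3_m[OF g3]] by simp
    next
      case False
      then have E: "{xs \<in> bin_seqs n. sum_list xs = j1} = {}" using bin_sum_le by fastforce
      show ?thesis unfolding E using False by simp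
    qed
    finally show ?thesis .
  qed
  have A1: "1 \<le> j1 \<Longrightarrow> (\<Sum>xs\<in>{xs \<in> bin_seqs n. sum_list xs = j1 - 1}. WJcol f \<eta> \<Lambda> (Suc n) i1 (xs @ [1]) i2 ys (- \<eta> * \<Lambda>) l)
    = (if 1 \<le> i2 + b then Rg f \<eta> \<Lambda> n i1 (j1 - 1) (i2 + b - 1) (sum_list ys') (l + 2 * \<eta>)
      * W1 f \<eta> \<Lambda> (int i2 - 1 + int b) 1 (int i2) b V l else 0)"
  proof -
    assume j11: "1 \<le> j1"
    show ?thesis
    proof (cases "1 \<le> i2 + b")
      case True
      have "(\<Sum>xs\<in>{xs \<in> bin_seqs n. sum_list xs = j1 - 1}. WJcol f \<eta> \<Lambda> (Suc n) i1 (xs @ [1]) i2 ys (- \<eta> * \<Lambda>) l)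
         = (\<Sum>xs\<in>{xs \<in> bin_seqs n. sum_list xs = j1 - 1}. WJcol f \<eta> \<Lambda> n i1 xs (i2 + b - 1) ys' (- \<eta> * \<Lambda>) (l + 2 * \<eta>)
             * W1 f \<eta> \<Lambda> (int i2 - 1 + int b) 1 (int i2) b V l)"
      proof (rule sum.cong[OF refl])
        fix xs assume "xs \<in> {xs \<in> bin_seqs n. sum_list xs = j1 - 1}"
        then have lx: "length xs = n" unfolding bin_seqs_def by simp
        have e: "nat (int i2 - 1 + int b) = i2 + b - 1" "0 \<le> int i2 - 1 + int b"
          using True by simp_all
        show "WJcol f \<eta> \<Lambda> (Suc n) i1 (xs @ [1]) i2 ys (- \<eta> * \<Lambda>) l
           = WJcol f \<eta> \<Lambda> n i1 xs (i2 + b - 1) ys' (- \<eta> * \<Lambda>) (l + 2 * \<eta>) * W1 f \<eta> \<Lambda> (int i2 - 1 + int b) 1 (int i2) b V l"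
          unfolding ysd WJcol_snoc[OF lx lys'] V_def using e by simp
      qed
      also have "\<dots> = (\<Sum>xs\<in>{xs \<in> bin_seqs n. sum_list xs = j1 - 1}. WJcol f \<eta> \<Lambda> n i1 xs (i2 + b - 1) ys' (- \<eta> * \<Lambda>) (l + 2 * \<eta>))
             * W1 f \<eta> \<Lambda> (int i2 - 1 + int b) 1 (int i2) b V l"
        by (rule sum_distrib_right[symmetric])
      also have "(\<Sum>xs\<in>{xs \<in> bin_seqs n. sum_list xs = j1 - 1}. WJcol f \<eta> \<Lambda> n i1 xs (i2 + b - 1) ys' (- \<eta> * \<Lambda>) (l + 2 * \<eta>))
         = Rg f \<eta> \<Lambda> n i1 (j1 - 1) (i2 + b - 1) (sum_list ys') (l + 2 * \<eta>)"
      proof -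
        have jl: "j1 - 1 \<le> n" using Suc.prems(3) by simp
        have c: "i1 + (j1 - 1) = i2 + b - 1 + sum_list ys'" using Suc.prems(4) j2 j11 True by simp
        show ?thesis by (rule Suc.IH[OF ys' refl jl c g3_p[OF g3]])
      qed
      finally show ?thesis using True by simp
    next
      case False
      then have "\<not> 0 \<le> int i2 - int 1 + int b" by simp
      then have "WJcol f \<eta> \<Lambda> (Suc n) i1 (xs @ [1]) i2 ys (- \<eta> * \<Lambda>) l = 0" if "xs \<in> {xs \<in> bin_seqs n. sum_list xs = j1 - 1}" for xs
      proof -
        have lx: "length xs = n" using that unfolding bin_seqs_def by simp
        show ?thesis unfolding ysd WJcol_snoc[OF lx lys'] using \<open>\<not> 0 \<le> int i2 - int 1 + int b\<close> by simp
      qed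
      then show ?thesis using False by simp
    qed
  qed
  have LHS: "(\<Sum>xs\<in>{xs \<in> bin_seqs (Suc n). sum_list xs = j1}. WJcol f \<eta> \<Lambda> (Suc n) i1 xs i2 ys (- \<eta> * \<Lambda>) l)
     = (if j1 \<le> n then Rg f \<eta> \<Lambda> n i1 j1 (i2 + b) (sum_list ys') (l - 2 * \<eta>) else 0)
      * W1 f \<eta> \<Lambda> (int i2 + int b) 0 (int i2) b V l
     + (if 1 \<le> j1 then (if 1 \<le> i2 + b then Rg f \<eta> \<Lambda> n i1 (j1 - 1) (i2 + b - 1) (sum_list ys') (l + 2 * \<eta>)
      * W1 f \<eta> \<Lambda> (int i2 - 1 + int b) 1 (int i2) b V l else 0) else 0)"
    unfolding sum_snoc A0 using A1 by simp
  show ?case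
  proof (cases "b = 0")
    case True
    have R: "Rg f \<eta> \<Lambda> (Suc n) i1 j1 i2 j2 l =
     (if j1 \<le> n then Rg f \<eta> \<Lambda> n i1 j1 i2 j2 (l - 2 * \<eta>) * W1 f \<eta> \<Lambda> (int i2) 0 (int i2) 0 V l else 0)
   + (if 1 \<le> j1 \<and> 1 \<le> i2 then Rg f \<eta> \<Lambda> n i1 (j1 - 1) (i2 - 1) j2 (l + 2 * \<eta>) * W1 f \<eta> \<Lambda> (int i2 - 1) 1 (int i2) 0 V l else 0)"
      unfolding V_def by (rule rec_c0[OF det g3]) (use True j2 sle Suc.prems(3,4) in simp_all)
    show ?thesis unfolding LHS R using True j2 by simp
  next
    case False
    then have b1: "b = 1" using b by simp
    have R: "Rg f \<eta> \<Lambda> (Suc n) i1 j1 i2 j2 l =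
     (if j1 \<le> n then Rg f \<eta> \<Lambda> n i1 j1 (Suc i2) (sum_list ys') (l - 2 * \<eta>) * W1 f \<eta> \<Lambda> (int i2 + 1) 0 (int i2) 1 V l else 0)
   + (if 1 \<le> j1 then Rg f \<eta> \<Lambda> n i1 (j1 - 1) i2 (sum_list ys') (l + 2 * \<eta>) * W1 f \<eta> \<Lambda> (int i2) 1 (int i2) 1 V l else 0)"
      unfolding V_def by (rule rec_c1[OF det g3]) (use b1 j2 sle Suc.prems(3,4) in simp_all)
    show ?thesis unfolding LHS R using b1 by simp
  qed
qed

end


lemma epoch_P: "b = a + 2 * \<eta> * of_int c \<Longrightarrow> epoch f \<eta> b (int n) = P f \<eta> a c n"
  unfolding epoch_def P_def G_def by (simp add: algebra_simps)

lemma sin_detprop: "detprop (\<lambda>z. sin (of_real pi * z))"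
  unfolding detprop_def
proof (intro exI allI)
  fix x y :: complex
  define a where "a = of_real pi * x"
  define b where "b = of_real pi * y"
  have "sin (of_real pi * (x + y)) * sin (of_real pi * (x - y)) = sin (a + b) * sin (a - b)"
    unfolding a_def b_def by (simp add: algebra_simps)
  also have "\<dots> = (sin a * cos b + cos a * sin b) * (sin a * cos b - cos a * sin b)"
    by (simp add: sin_add sin_diff)
  also have "\<dots> = (sin a)^2 * (cos b)^2 - (cos a)^2 * (sin b)^2"
    by (simp add: algebra_simps power2_eq_square)
  also have "\<dots> = (sin a)^2 - (sin b)^2"
    by (simp add: cos_squared_eq algebra_simps)
  finally show "sin (of_real pi * (x + y)) * sin (of_real pi * (x - y)) =
     (\<lambda>x. (sin (of_real pi * x))^2) x * (\<lambda>_. 1) y - (\<lambda>_. 1) x * (\<lambda>x. (sin (of_real pi * x))^2) y"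
    unfolding a_def b_def by simp
qed

lemma theta_detprop: "Im \<tau> > 0 \<Longrightarrow> detprop (theta_fn \<tau>)"
  unfolding detprop_def
  by (rule exI[of _ "\<lambda>x. \<Sum>\<^sub>\<infinity>r. hh \<tau> x (2 * r + 0)"], rule exI[of _ "\<lambda>x. \<Sum>\<^sub>\<infinity>r. hh \<tau> x (2 * r + 1)"])
     (simp add: theta_det)

context gen
begin

lemma RHS_eq:
  assumes f0: "f 0 = 0" and j1: "j1 \<le> J" and j2: "j2 \<le> J" and cons: "i1 + j1 = i2 + j2"
    and g3: "\<forall>k::int. f (l + 2 * \<eta> * of_int k) \<noteq> 0"
  shows "f (2 * \<eta>) powi (int i2 - int i1)
    * ((if i1 \<ge> j2 then 1 else 0) * epoch f \<eta> (2 * \<eta> * of_nat J) (int J)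
       / (epoch f \<eta> (2 * \<eta> * of_nat j1) (int j1) * epoch f \<eta> (2 * \<eta> * of_nat (J - j1)) (int (J - j1))))
    * (epoch f \<eta> (2 * \<eta> * \<Lambda>) (int i1) / epoch f \<eta> (2 * \<eta> * \<Lambda>) (int i2))
    * (epoch f \<eta> (2 * \<eta> * of_nat i1) (int j2) * epoch f \<eta> (2 * \<eta> * (\<Lambda> - of_nat i1)) (int (J - j2))
       / epoch f \<eta> (2 * \<eta> * \<Lambda>) (int J))
    * (epoch f \<eta> (l + 2 * \<eta> * of_nat i2) (int (J - j1))
         * epoch f \<eta> (l + 2 * \<eta> * (of_nat i2 + of_nat j1 - \<Lambda> - 1)) (int j1)
       / (epoch f \<eta> (l + 2 * \<eta> * of_nat j1) (int (J - j1))
         * epoch f \<eta> (l + 2 * \<eta> * (2 * of_nat j1 - of_nat J - 1)) (int j1)))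
    = Rg f \<eta> \<Lambda> J i1 j1 i2 j2 l"
proof -
  have e0: "f (2 * \<eta>) = G f \<eta> 0 1" unfolding G_def by simp
  have e1: "epoch f \<eta> (2 * \<eta> * of_nat J) (int J) = P f \<eta> 0 (int J) J" by (rule epoch_P) simp
  have e2: "epoch f \<eta> (2 * \<eta> * of_nat j1) (int j1) = P f \<eta> 0 (int j1) j1" by (rule epoch_P) simp
  have e3: "epoch f \<eta> (2 * \<eta> * of_nat (J - j1)) (int (J - j1)) = P f \<eta> 0 (int J - int j1) (J - j1)"
    by (rule epoch_P) (use j1 in \<open>simp add: of_nat_diff\<close>)
  have e4: "epoch f \<eta> (2 * \<eta> * \<Lambda>) (int k) = P f \<eta> (2 * \<eta> * \<Lambda>) 0 k" for k by (rule epoch_P) simp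
  have e5: "epoch f \<eta> (2 * \<eta> * of_nat i1) (int j2) = P f \<eta> 0 (int i1) j2" by (rule epoch_P) simp
  have e6: "epoch f \<eta> (2 * \<eta> * (\<Lambda> - of_nat i1)) (int (J - j2)) = P f \<eta> (2 * \<eta> * \<Lambda>) (- int i1) (J - j2)"
    by (rule epoch_P) (simp add: algebra_simps)
  have e7: "epoch f \<eta> (l + 2 * \<eta> * of_nat i2) (int (J - j1)) = P f \<eta> l (int i2) (J - j1)" by (rule epoch_P) simp
  have e8: "epoch f \<eta> (l + 2 * \<eta> * (of_nat i2 + of_nat j1 - \<Lambda> - 1)) (int j1) = P f \<eta> (l - 2 * \<eta> * \<Lambda>) (int i2 + int j1 - 1) j1"
    by (rule epoch_P) (simp add: algebra_simps)
  have e9: "epoch f \<eta> (l + 2 * \<eta> * of_nat j1) (int (J - j1)) = P f \<eta> l (int j1) (J - j1)" by (rule epoch_P) simp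
  have e10: "epoch f \<eta> (l + 2 * \<eta> * (2 * of_nat j1 - of_nat J - 1)) (int j1) = P f \<eta> l (2 * int j1 - int J - 1) j1"
    by (rule epoch_P) (simp add: algebra_simps)
  show ?thesis
  proof (cases "j2 \<le> i1")
    case True
    have nz: "P f \<eta> 0 (int j1) j1 \<noteq> 0" "P f \<eta> 0 (int J - int j1) (J - j1) \<noteq> 0"
      "P f \<eta> (2 * \<eta> * \<Lambda>) 0 i2 \<noteq> 0" "P f \<eta> (2 * \<eta> * \<Lambda>) 0 J \<noteq> 0"
      "P f \<eta> l (int j1) (J - j1) \<noteq> 0" "P f \<eta> l (2 * int j1 - int J - 1) j1 \<noteq> 0"
      using j1 by (auto intro!: P0_nz PL_nz Pl_nz[OF g3])
    show ?thesis unfolding e0 e1 e2 e3 e4 e5 e6 e7 e8 e9 e10 Rg_def Rc_def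
      using True nz by (simp add: field_simps)
  next
    case False
    then have "P f \<eta> 0 (int i1) j2 = 0" by (intro P0_zero[where f=f and \<eta>=\<eta>] f0) simp
    then show ?thesis unfolding Rg_def using False by simp
  qed
qed

end

theorem theorem3p10:
  fixes \<eta> \<tau> \<Lambda> l :: complex and f :: "complex \<Rightarrow> complex"
    and J i1 i2 j1 j2 :: nat
  assumes tau: "Im \<tau> > 0"
    and f_choice: "f = theta_fn \<tau> \<or> f = (\<lambda>z. sin (of_real pi * z))"
    and gen1: "\<forall>k::int. k \<noteq> 0 \<longrightarrow> f (2 * \<eta> * of_int k) \<noteq> 0"
    and gen2: "\<forall>k::int. f (2 * \<eta> * (\<Lambda> - of_int k)) \<noteq> 0"
    and gen3: "\<forall>k::int. f (l + 2 * \<eta> * of_int k) \<noteq> 0"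
    and J: "J > 0"
    and j1: "j1 \<le> J" and j2: "j2 \<le> J"
    and cons: "i1 + j1 = i2 + j2"
  shows "WJ f \<eta> \<Lambda> J i1 j1 i2 j2 (- \<eta> * \<Lambda>) l =
    f (2 * \<eta>) powi (int i2 - int i1)
    * ((if i1 \<ge> j2 then 1 else 0) * epoch f \<eta> (2 * \<eta> * of_nat J) (int J)
       / (epoch f \<eta> (2 * \<eta> * of_nat j1) (int j1) * epoch f \<eta> (2 * \<eta> * of_nat (J - j1)) (int (J - j1))))
    * (epoch f \<eta> (2 * \<eta> * \<Lambda>) (int i1) / epoch f \<eta> (2 * \<eta> * \<Lambda>) (int i2))
    * (epoch f \<eta> (2 * \<eta> * of_nat i1) (int j2) * epoch f \<eta> (2 * \<eta> * (\<Lambda> - of_nat i1)) (int (J - j2))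
       / epoch f \<eta> (2 * \<eta> * \<Lambda>) (int J))
    * (epoch f \<eta> (l + 2 * \<eta> * of_nat i2) (int (J - j1))
         * epoch f \<eta> (l + 2 * \<eta> * (of_nat i2 + of_nat j1 - \<Lambda> - 1)) (int j1)
       / (epoch f \<eta> (l + 2 * \<eta> * of_nat j1) (int (J - j1))
         * epoch f \<eta> (l + 2 * \<eta> * (2 * of_nat j1 - of_nat J - 1)) (int j1)))"
proof -
  interpret gen f \<eta> \<Lambda> by unfold_locales (fact gen1, fact gen2)
  have det: "detprop f" using f_choice theta_detprop[OF tau] sin_detprop by auto
  have f0: "f 0 = 0" by (rule f0[OF det])
  define K where "K = (SOME K. K \<in> bin_seqs J \<and> sum_list K = j2)"
  have "replicate j2 1 @ replicate (J - j2) 0 \<in> bin_seqs J \<and> sum_list (replicate j2 (1::nat) @ replicate (J - j2) 0) = j2"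
    using j2 unfolding bin_seqs_def by (auto simp: sum_list_replicate)
  then have K: "K \<in> bin_seqs J" "sum_list K = j2" unfolding K_def by (metis (mono_tags, lifting) someI)+
  have "WJ f \<eta> \<Lambda> J i1 j1 i2 j2 (- \<eta> * \<Lambda>) l
      = (\<Sum>J1\<in>{xs \<in> bin_seqs J. sum_list xs = j1}. WJcol f \<eta> \<Lambda> J i1 J1 i2 K (- \<eta> * \<Lambda>) l)"
    unfolding WJ_def K_def Let_def ..
  also have "\<dots> = Rg f \<eta> \<Lambda> J i1 j1 i2 j2 l"
    by (rule colsum[OF det K j1 cons gen3])
  finally have "WJ f \<eta> \<Lambda> J i1 j1 i2 j2 (- \<eta> * \<Lambda>) l = Rg f \<eta> \<Lambda> J i1 j1 i2 j2 l" .
  then show ?thesis by (simp only: RHS_eq[OF f0 j1 j2 cons gen3])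
qed

end
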